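(* Let $Q$ be a finite quiver, $R\subseteq\mathbb{C}Q_{\ge1}$ a finite-dimensional $\mathbb{C}Q_0$-sub-bimodule of bounded type, $(B,\mathfrak{m})$ a deformation base, $\psi:R\to\mathfrak{m}\mathbb{C}Q$ a $\mathbb{C}Q_0$-bimodule map and $P=(\mathrm{Id}+\psi)(R)$. If $I(P)$ is quasi-flat, then $I(P)_{\mathbb{C}Q}$ is quasi-flat, i.e. $I(P)_{\mathbb{C}Q}\cap\mathfrak{m}\mathbb{C}Q\subseteq\mathfrak{m}I(P)_{\mathbb{C}Q}$.
   Context: Deformation base: complete local Noetherian unital $\mathbb{C}$-algebra $B$ with maximal ideal $\mathfrak{m}$, $B/\mathfrak{m}=\mathbb{C}$; $B\widehat{\otimes}X=\varprojlim(B/\mathfrak{m}^k\otimes X)$; for a subspace $Y\subseteq B\widehat{\otimes}X$, $\mathfrak{m}Y=\{\sum_im_iy_i:y_i\in Y,m_i\in\mathfrak{m}^{k_i},k_i\ge1,k_i\to\infty\}$, and $\mathfrak{m}X$ is the image of $\mathfrak{m}\widehat{\otimes}X$. $\widehat{\mathbb{C}Q}$ is the completed path algebra. $(P)=\{\sum_{i\ge0}p_i(r_i+\psi(r_i))q_i: r_i\in R,p_i,q_i\text{ paths},|p_i|+|q_i|\to\infty\}\subseteq B\widehat{\otimes}\widehat{\mathbb{C}Q}$; $I(P)=\{\sum_jb_jy_j:y_j\in(P),b_j\in\mathfrak{m}^{k_j},k_j\to\infty\}$; $I(P)$ is quasi-flat if $I(P)\cap\mathfrak{m}\widehat{\mathbb{C}Q}\subseteq\mathfrak{m}I(P)$.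 $I(P)_{\mathbb{C}Q}=\{\sum_ib_ip_i(r_i+\psi(r_i))q_i:b_i\in\mathfrak{m}^{k_i},k_i\to\infty,r_i\in R,p_i,q_i\text{ paths}\}\subseteq B\widehat{\otimes}\mathbb{C}Q$. Bounded type: $R$ has a basis $F$ (each element in some $e_v\mathbb{C}Qe_w$) such that, with $\sim$ the equivalence relation on paths generated by $pc_iq\sim pc_jq$ whenever $c_i,c_j$ are paths with nonzero coefficient in the same $c\in F$, $h(N)=\sup\{|q|:\exists p,|p|\le N,p\sim q\}<\infty$ for all $N$. *)

theory Defs
  imports Complex_Main
begin

section \<open>Quivers and paths\<close>

text \<open>A path is a triple (start vertex, end vertex, list of arrows).  Trivial paths
 e_v are (v, v, []).  The product p q of paths is nonzero iff pend p = pstart q.\<close>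

type_synonym ('v,'a) qpath = "'v \<times> 'v \<times> 'a list"

definition pstart :: "('v,'a) qpath \<Rightarrow> 'v" where "pstart p = fst p"
definition pend :: "('v,'a) qpath \<Rightarrow> 'v" where "pend p = fst (snd p)"
definition parrows :: "('v,'a) qpath \<Rightarrow> 'a list" where "parrows p = snd (snd p)"
definition plen :: "('v,'a) qpath \<Rightarrow> nat" where "plen p = length (parrows p)"

definition is_path :: "'v set \<Rightarrow> 'a set \<Rightarrow> ('a \<Rightarrow> 'v) \<Rightarrow> ('a \<Rightarrow> 'v) \<Rightarrow> ('v,'a) qpath \<Rightarrow> bool" where
  "is_path V A s t p \<longleftrightarrow> pstart p \<in> V \<and> pend p \<in> V \<and> set (parrows p) \<subseteq> A \<and>
     (parrows p = [] \<longrightarrow> pstart p = pend p) \<and>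
     (parrows p \<noteq> [] \<longrightarrow> s (hd (parrows p)) = pstart p \<and> t (last (parrows p)) = pend p \<and>
        (\<forall>i. Suc i < length (parrows p) \<longrightarrow> t (parrows p ! i) = s (parrows p ! Suc i)))"

definition pcat :: "('v,'a) qpath \<Rightarrow> ('v,'a) qpath \<Rightarrow> ('v,'a) qpath" where
  "pcat p q = (pstart p, pend q, parrows p @ parrows q)"

definition finite_quiver :: "'v set \<Rightarrow> 'a set \<Rightarrow> ('a \<Rightarrow> 'v) \<Rightarrow> ('a \<Rightarrow> 'v) \<Rightarrow> bool" where
  "finite_quiver V A s t \<longleftrightarrow> finite V \<and> finite A \<and> (\<forall>a\<in>A. s a \<in> V \<and> t a \<in> V)"

text \<open>Elements of (completed) path algebras with coefficients in a ring are functions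
 from paths to coefficients (vanishing off genuine paths).\<close>

definition pmul3 :: "'v set \<Rightarrow> 'a set \<Rightarrow> ('a \<Rightarrow> 'v) \<Rightarrow> ('a \<Rightarrow> 'v) \<Rightarrow>
    ('v,'a) qpath \<Rightarrow> (('v,'a) qpath \<Rightarrow> 'r::comm_monoid_add) \<Rightarrow> ('v,'a) qpath \<Rightarrow> ('v,'a) qpath \<Rightarrow> 'r" where
  "pmul3 V A s t p f q w =
     (\<Sum>u \<in> {u. is_path V A s t u \<and> pend p = pstart u \<and> pend u = pstart q \<and> pcat (pcat p u) q = w}. f u)"

text \<open>Left / right multiplication by the idempotent e_v.\<close>
definition lvert :: "'v \<Rightarrow> (('v,'a) qpath \<Rightarrow> 'r::zero) \<Rightarrow> ('v,'a) qpath \<Rightarrow> 'r" where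
  "lvert v f w = (if pstart w = v then f w else 0)"
definition rvert :: "'v \<Rightarrow> (('v,'a) qpath \<Rightarrow> 'r::zero) \<Rightarrow> ('v,'a) qpath \<Rightarrow> 'r" where
  "rvert v f w = (if pend w = v then f w else 0)"

section \<open>Linear algebra over C for subspaces of CQ\<close>

definition cspan :: "(('v,'a) qpath \<Rightarrow> complex) set \<Rightarrow> (('v,'a) qpath \<Rightarrow> complex) set" where
  "cspan F = {f. \<exists>G c. finite G \<and> G \<subseteq> F \<and> (\<forall>w. f w = (\<Sum>g\<in>G. c g * g w))}"

definition clin_indep :: "(('v,'a) qpath \<Rightarrow> complex) set \<Rightarrow> bool" where
  "clin_indep F \<longleftrightarrow> (\<forall>G c. finite G \<and> G \<subseteq> F \<and> (\<forall>w. (\<Sum>g\<in>G. c g * g w) = 0) \<longrightarrow> (\<forall>g\<in>G. c g = 0))"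

definition fd_sub_bimodule_ge1 :: "'v set \<Rightarrow> 'a set \<Rightarrow> ('a \<Rightarrow> 'v) \<Rightarrow> ('a \<Rightarrow> 'v) \<Rightarrow>
    (('v,'a) qpath \<Rightarrow> complex) set \<Rightarrow> bool" where
  "fd_sub_bimodule_ge1 V A s t R \<longleftrightarrow>
     (\<forall>r\<in>R. finite {w. r w \<noteq> 0} \<and> (\<forall>w. r w \<noteq> 0 \<longrightarrow> is_path V A s t w \<and> 1 \<le> plen w)) \<and>
     (\<lambda>w. 0) \<in> R \<and>
     (\<forall>r1\<in>R. \<forall>r2\<in>R. (\<lambda>w. r1 w + r2 w) \<in> R) \<and>
     (\<forall>c. \<forall>r\<in>R. (\<lambda>w. c * r w) \<in> R) \<and>
     (\<forall>v\<in>V. \<forall>r\<in>R. lvert v r \<in> R \<and> rvert v r \<in> R) \<and>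
     (\<exists>G. finite G \<and> G \<subseteq> R \<and> R \<subseteq> cspan G)"

definition sim_step :: "'v set \<Rightarrow> 'a set \<Rightarrow> ('a \<Rightarrow> 'v) \<Rightarrow> ('a \<Rightarrow> 'v) \<Rightarrow>
    (('v,'a) qpath \<Rightarrow> complex) set \<Rightarrow> ('v,'a) qpath \<Rightarrow> ('v,'a) qpath \<Rightarrow> bool" where
  "sim_step V A s t F x y \<longleftrightarrow> (\<exists>c\<in>F. \<exists>ci cj p q. c ci \<noteq> 0 \<and> c cj \<noteq> 0 \<and>
      is_path V A s t p \<and> is_path V A s t q \<and>
      pend p = pstart ci \<and> pend ci = pstart q \<and> pend p = pstart cj \<and> pend cj = pstart q \<and>
      x = pcat (pcat p ci) q \<and> y = pcat (pcat p cj) q)"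

definition bounded_type :: "'v set \<Rightarrow> 'a set \<Rightarrow> ('a \<Rightarrow> 'v) \<Rightarrow> ('a \<Rightarrow> 'v) \<Rightarrow>
    (('v,'a) qpath \<Rightarrow> complex) set \<Rightarrow> bool" where
  "bounded_type V A s t R \<longleftrightarrow> (\<exists>F. F \<subseteq> R \<and> clin_indep F \<and> R \<subseteq> cspan F \<and>
     (\<forall>c\<in>F. \<exists>v\<in>V. \<exists>w\<in>V. \<forall>u. c u \<noteq> 0 \<longrightarrow> pstart u = v \<and> pend u = w) \<and>
     (\<forall>N. \<exists>M. \<forall>p q. is_path V A s t p \<and> plen p \<le> N \<and> equivclp (sim_step V A s t F) p q
            \<longrightarrow> plen q \<le> M))"

section \<open>Commutative algebra: deformation bases\<close>

definition is_ideal :: "'b::comm_ring_1 set \<Rightarrow> bool" where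
  "is_ideal I \<longleftrightarrow> 0 \<in> I \<and> (\<forall>x\<in>I. \<forall>y\<in>I. x + y \<in> I) \<and> (\<forall>a. \<forall>x\<in>I. a * x \<in> I)"

definition ideal_gen :: "'b::comm_ring_1 set \<Rightarrow> 'b set" where
  "ideal_gen S = \<Inter>{I. is_ideal I \<and> S \<subseteq> I}"

primrec mpow :: "'b::comm_ring_1 set \<Rightarrow> nat \<Rightarrow> 'b set" where
  "mpow m 0 = UNIV"
| "mpow m (Suc k) = ideal_gen {a * b | a b. a \<in> m \<and> b \<in> mpow m k}"

definition maximal_ideal :: "'b::comm_ring_1 set \<Rightarrow> bool" where
  "maximal_ideal M \<longleftrightarrow> is_ideal M \<and> M \<noteq> UNIV \<and>
     (\<forall>J. is_ideal J \<and> M \<subseteq> J \<longrightarrow> J = M \<or> J = UNIV)"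

definition noetherian_ring :: "'b::comm_ring_1 itself \<Rightarrow> bool" where
  "noetherian_ring _ \<longleftrightarrow> (\<forall>I::'b set. is_ideal I \<longrightarrow> (\<exists>F. finite F \<and> I = ideal_gen F))"

definition madic_complete :: "'b::comm_ring_1 set \<Rightarrow> bool" where
  "madic_complete m \<longleftrightarrow> (\<Inter>k. mpow m k) = {0} \<and>
     (\<forall>x::nat \<Rightarrow> 'b. (\<forall>k. \<exists>N. \<forall>n\<ge>N. \<forall>n'\<ge>N. x n - x n' \<in> mpow m k) \<longrightarrow>
        (\<exists>L. \<forall>k. \<exists>N. \<forall>n\<ge>N. x n - L \<in> mpow m k))"

definition ring_hom_C :: "(complex \<Rightarrow> 'b::comm_ring_1) \<Rightarrow> bool" where
  "ring_hom_C \<iota> \<longleftrightarrow> \<iota> 1 = 1 \<and> (\<forall>x y. \<iota> (x + y) = \<iota> x + \<iota> y) \<and> (\<forall>x y. \<iota> (x * y) = \<iota> x * \<iota> y)"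

definition deformation_base :: "(complex \<Rightarrow> 'b::comm_ring_1) \<Rightarrow> 'b set \<Rightarrow> bool" where
  "deformation_base \<iota> m \<longleftrightarrow> ring_hom_C \<iota> \<and> maximal_ideal m \<and>
     (\<forall>M. maximal_ideal M \<longrightarrow> M = m) \<and> noetherian_ring TYPE('b) \<and> madic_complete m \<and>
     (\<forall>b. \<exists>!c. b - \<iota> c \<in> m)"

section \<open>Completed tensor products, infinite sums, ideals I(P)\<close>

definition msums :: "'b::comm_ring_1 set \<Rightarrow> nat set \<Rightarrow> (nat \<Rightarrow> 'b) \<Rightarrow> 'b \<Rightarrow> bool" where
  "msums m J f L \<longleftrightarrow> (\<forall>n. \<exists>N. \<forall>M\<ge>N. (\<Sum>j\<in>J \<inter> {..<M}. f j) - L \<in> mpow m n)"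

text \<open>Sums  sum_i b_i y_i  with y_i \<in> Y, b_i \<in> m^{k_i}, k_i \<ge> k0, k_i \<rightarrow> \<infinity>
 (k0 = 1 gives mY, k0 = 0 gives the closed ideal-type span).  Convergence is
 coefficientwise m-adic, which is the topology of the completed tensor product.\<close>
definition mlin :: "'b::comm_ring_1 set \<Rightarrow> nat \<Rightarrow> ('p \<Rightarrow> 'b) set \<Rightarrow> ('p \<Rightarrow> 'b) set" where
  "mlin m k0 Y = {x. \<exists>J b y k. (\<forall>i\<in>J. y i \<in> Y \<and> k0 \<le> k i \<and> b i \<in> mpow m (k i)) \<and>
       (\<forall>n. finite {i\<in>J. k i \<le> n}) \<and> (\<forall>w. msums m J (\<lambda>i. b i * y i w) (x w))}"

text \<open>m CQ-hat (image of m \<otimes>-hat CQ-hat) and m CQ (image of m \<otimes>-hat CQ) inside B \<otimes>-hat CQ-hat.\<close>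
definition mCQhat :: "'v set \<Rightarrow> 'a set \<Rightarrow> ('a \<Rightarrow> 'v) \<Rightarrow> ('a \<Rightarrow> 'v) \<Rightarrow> 'b::comm_ring_1 set \<Rightarrow>
    (('v,'a) qpath \<Rightarrow> 'b) set" where
  "mCQhat V A s t m = {f. (\<forall>w. f w \<in> m) \<and> (\<forall>w. \<not> is_path V A s t w \<longrightarrow> f w = 0)}"

definition mCQ :: "'v set \<Rightarrow> 'a set \<Rightarrow> ('a \<Rightarrow> 'v) \<Rightarrow> ('a \<Rightarrow> 'v) \<Rightarrow> 'b::comm_ring_1 set \<Rightarrow>
    (('v,'a) qpath \<Rightarrow> 'b) set" where
  "mCQ V A s t m = {f. f \<in> mCQhat V A s t m \<and> (\<forall>k. finite {w. f w \<notin> mpow m k})}"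

definition bimod_map_to_mCQ :: "'v set \<Rightarrow> 'a set \<Rightarrow> ('a \<Rightarrow> 'v) \<Rightarrow> ('a \<Rightarrow> 'v) \<Rightarrow>
    (complex \<Rightarrow> 'b::comm_ring_1) \<Rightarrow> 'b set \<Rightarrow> (('v,'a) qpath \<Rightarrow> complex) set \<Rightarrow>
    ((('v,'a) qpath \<Rightarrow> complex) \<Rightarrow> (('v,'a) qpath \<Rightarrow> 'b)) \<Rightarrow> bool" where
  "bimod_map_to_mCQ V A s t \<iota> m R \<psi> \<longleftrightarrow>
     (\<forall>r\<in>R. \<psi> r \<in> mCQ V A s t m) \<and>
     (\<forall>r1\<in>R. \<forall>r2\<in>R. \<forall>w. \<psi> (\<lambda>u. r1 u + r2 u) w = \<psi> r1 w + \<psi> r2 w) \<and>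
     (\<forall>c. \<forall>r\<in>R. \<forall>w. \<psi> (\<lambda>u. c * r u) w = \<iota> c * \<psi> r w) \<and>
     (\<forall>v\<in>V. \<forall>r\<in>R. \<psi> (lvert v r) = lvert v (\<psi> r) \<and> \<psi> (rvert v r) = rvert v (\<psi> r))"

definition rpsi :: "(complex \<Rightarrow> 'b::comm_ring_1) \<Rightarrow>
    ((('v,'a) qpath \<Rightarrow> complex) \<Rightarrow> (('v,'a) qpath \<Rightarrow> 'b)) \<Rightarrow>
    (('v,'a) qpath \<Rightarrow> complex) \<Rightarrow> ('v,'a) qpath \<Rightarrow> 'b" where
  "rpsi \<iota> \<psi> r w = \<iota> (r w) + \<psi> r w"

text \<open>(P) = { sum_i p_i (r_i + psi r_i) q_i : |p_i| + |q_i| \<rightarrow> \<infinity> }; index set J \<subseteq> nat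
 (possibly finite).  Coefficients are finite sums since only terms with |p_i|+|q_i| \<le> |w|
 contribute to the coefficient of w.\<close>
definition Pideal_gen :: "'v set \<Rightarrow> 'a set \<Rightarrow> ('a \<Rightarrow> 'v) \<Rightarrow> ('a \<Rightarrow> 'v) \<Rightarrow>
    (complex \<Rightarrow> 'b::comm_ring_1) \<Rightarrow> (('v,'a) qpath \<Rightarrow> complex) set \<Rightarrow>
    ((('v,'a) qpath \<Rightarrow> complex) \<Rightarrow> (('v,'a) qpath \<Rightarrow> 'b)) \<Rightarrow> (('v,'a) qpath \<Rightarrow> 'b) set" where
  "Pideal_gen V A s t \<iota> R \<psi> = {x. \<exists>(J::nat set) r p q.
      (\<forall>i\<in>J. r i \<in> R \<and> is_path V A s t (p i) \<and> is_path V A s t (q i)) \<and>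
      (\<forall>n. finite {i\<in>J. plen (p i) + plen (q i) \<le> n}) \<and>
      (\<forall>w. x w = (\<Sum>i\<in>{i\<in>J. plen (p i) + plen (q i) \<le> plen w}.
                    pmul3 V A s t (p i) (rpsi \<iota> \<psi> (r i)) (q i) w))}"

definition IP :: "'v set \<Rightarrow> 'a set \<Rightarrow> ('a \<Rightarrow> 'v) \<Rightarrow> ('a \<Rightarrow> 'v) \<Rightarrow>
    (complex \<Rightarrow> 'b::comm_ring_1) \<Rightarrow> 'b set \<Rightarrow> (('v,'a) qpath \<Rightarrow> complex) set \<Rightarrow>
    ((('v,'a) qpath \<Rightarrow> complex) \<Rightarrow> (('v,'a) qpath \<Rightarrow> 'b)) \<Rightarrow> (('v,'a) qpath \<Rightarrow> 'b) set" where
  "IP V A s t \<iota> m R \<psi> = mlin m 0 (Pideal_gen V A s t \<iota> R \<psi>)"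

definition IP_CQ :: "'v set \<Rightarrow> 'a set \<Rightarrow> ('a \<Rightarrow> 'v) \<Rightarrow> ('a \<Rightarrow> 'v) \<Rightarrow>
    (complex \<Rightarrow> 'b::comm_ring_1) \<Rightarrow> 'b set \<Rightarrow> (('v,'a) qpath \<Rightarrow> complex) set \<Rightarrow>
    ((('v,'a) qpath \<Rightarrow> complex) \<Rightarrow> (('v,'a) qpath \<Rightarrow> 'b)) \<Rightarrow> (('v,'a) qpath \<Rightarrow> 'b) set" where
  "IP_CQ V A s t \<iota> m R \<psi> = mlin m 0
     {pmul3 V A s t p (rpsi \<iota> \<psi> r) q | p r q. r \<in> R \<and> is_path V A s t p \<and> is_path V A s t q}"

end

theory Submission
  imports Defs "HOL-Library.Countable_Set"
begin

section \<open>Ideals and powers\<close>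

lemma ideal_gen_ideal: "is_ideal (ideal_gen S)"
  unfolding ideal_gen_def is_ideal_def by auto

lemma ideal_gen_sub: "S \<subseteq> ideal_gen S"
  unfolding ideal_gen_def by auto

lemma ideal_gen_least: "is_ideal I \<Longrightarrow> S \<subseteq> I \<Longrightarrow> ideal_gen S \<subseteq> I"
  unfolding ideal_gen_def by auto

lemma ideal_UNIV: "is_ideal UNIV" by (simp add: is_ideal_def)

lemma mpow_ideal: "is_ideal (mpow m k)"
  by (cases k) (auto simp: ideal_UNIV ideal_gen_ideal)

lemma ideal_0: "is_ideal I \<Longrightarrow> 0 \<in> I" by (simp add: is_ideal_def)
lemma ideal_add: "is_ideal I \<Longrightarrow> x \<in> I \<Longrightarrow> y \<in> I \<Longrightarrow> x + y \<in> I" by (simp add: is_ideal_def)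
lemma ideal_mult: "is_ideal I \<Longrightarrow> x \<in> I \<Longrightarrow> a * x \<in> I" by (simp add: is_ideal_def)
lemma ideal_mult2: "is_ideal I \<Longrightarrow> x \<in> I \<Longrightarrow> x * a \<in> I"
  by (metis ideal_mult mult.commute)
lemma ideal_neg: "is_ideal I \<Longrightarrow> x \<in> I \<Longrightarrow> - x \<in> I"
  by (metis ideal_mult mult_minus1)
lemma ideal_diff: "is_ideal I \<Longrightarrow> x \<in> I \<Longrightarrow> y \<in> I \<Longrightarrow> x - y \<in> I"
  by (metis ideal_add ideal_neg diff_conv_add_uminus)
lemma ideal_sum: "is_ideal I \<Longrightarrow> (\<And>i. i \<in> X \<Longrightarrow> f i \<in> I) \<Longrightarrow> sum f X \<in> I"
  by (induction X rule: infinite_finite_induct) (auto simp: ideal_0 ideal_add)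

lemma mpow_0 [simp]: "0 \<in> mpow m k" by (rule ideal_0[OF mpow_ideal])
lemma mpow_add: "x \<in> mpow m k \<Longrightarrow> y \<in> mpow m k \<Longrightarrow> x + y \<in> mpow m k"
  by (rule ideal_add[OF mpow_ideal])
lemma mpow_diff: "x \<in> mpow m k \<Longrightarrow> y \<in> mpow m k \<Longrightarrow> x - y \<in> mpow m k"
  by (rule ideal_diff[OF mpow_ideal])
lemma mpow_neg: "x \<in> mpow m k \<Longrightarrow> - x \<in> mpow m k"
  by (rule ideal_neg[OF mpow_ideal])
lemma mpow_multL: "x \<in> mpow m k \<Longrightarrow> a * x \<in> mpow m k"
  by (rule ideal_mult[OF mpow_ideal])
lemma mpow_multR: "x \<in> mpow m k \<Longrightarrow> x * a \<in> mpow m k"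
  by (rule ideal_mult2[OF mpow_ideal])
lemma mpow_sum: "(\<And>i. i \<in> X \<Longrightarrow> f i \<in> mpow m k) \<Longrightarrow> sum f X \<in> mpow m k"
  by (rule ideal_sum[OF mpow_ideal])

lemma mpow_Suc_sub: "mpow m (Suc k) \<subseteq> mpow m k"
  unfolding mpow.simps(2) by (rule ideal_gen_least[OF mpow_ideal]) (auto intro: mpow_multL)

lemma mpow_anti: "k \<le> k' \<Longrightarrow> mpow m k' \<subseteq> mpow m k"
proof (induction k' rule: dec_induct)
  case (step n) then show ?case using mpow_Suc_sub by blast
qed simp

lemma mpow_antiD: "x \<in> mpow m k' \<Longrightarrow> k \<le> k' \<Longrightarrow> x \<in> mpow m k"
  using mpow_anti by blast

lemma mpow_Suc_mult: "a \<in> m \<Longrightarrow> b \<in> mpow m k \<Longrightarrow> a * b \<in> mpow m (Suc k)"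
  using ideal_gen_sub by fastforce

lemma mpow_mult: "a \<in> mpow m i \<Longrightarrow> b \<in> mpow m j \<Longrightarrow> a * b \<in> mpow m (i + j)"
proof (induction i arbitrary: a b)
  case 0 then show ?case by (simp add: mpow_multL)
next
  case (Suc i)
  let ?T = "{a. \<forall>b\<in>mpow m j. a * b \<in> mpow m (Suc i + j)}"
  have "is_ideal ?T"
    unfolding is_ideal_def by (auto simp del: mpow.simps simp: distrib_right mult.assoc intro: mpow_add mpow_multL)
  moreover have "{x * y |x y. x \<in> m \<and> y \<in> mpow m i} \<subseteq> ?T"
  proof (clarsimp simp del: mpow.simps)
    fix x y c assume "x \<in> m" "y \<in> mpow m i" "c \<in> mpow m j"
    then show "x * y * c \<in> mpow m (Suc (i + j))"
      using Suc.IH by (simp del: mpow.simps add: mult.assoc mpow_Suc_mult)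
  qed
  ultimately have "mpow m (Suc i) \<subseteq> ?T" unfolding mpow.simps(2) by (rule ideal_gen_least)
  then show ?case using Suc.prems by auto
qed

lemma iota_0: "ring_hom_C \<iota> \<Longrightarrow> \<iota> 0 = 0"
  unfolding ring_hom_C_def by (metis add_cancel_right_right add_0)
lemma iota_add: "ring_hom_C \<iota> \<Longrightarrow> \<iota> (x + y) = \<iota> x + \<iota> y"
  unfolding ring_hom_C_def by simp
lemma iota_mult: "ring_hom_C \<iota> \<Longrightarrow> \<iota> (x * y) = \<iota> x * \<iota> y"
  unfolding ring_hom_C_def by simp
lemma iota_1: "ring_hom_C \<iota> \<Longrightarrow> \<iota> 1 = 1"
  unfolding ring_hom_C_def by simp
lemma iota_neg: "ring_hom_C \<iota> \<Longrightarrow> \<iota> (- x) = - \<iota> x"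
  by (metis iota_add iota_0 add.right_inverse add_eq_0_iff)
lemma iota_diff: "ring_hom_C \<iota> \<Longrightarrow> \<iota> (x - y) = \<iota> x - \<iota> y"
  by (metis iota_add iota_neg diff_conv_add_uminus)
lemma iota_sum: "ring_hom_C \<iota> \<Longrightarrow> \<iota> (sum f X) = (\<Sum>x\<in>X. \<iota> (f x))"
  by (induction X rule: infinite_finite_induct) (auto simp: iota_0 iota_add)


section \<open>Unconditional series\<close>

definition ser :: "'b::comm_ring_1 set \<Rightarrow> nat \<Rightarrow> ('p \<Rightarrow> 'b) set \<Rightarrow> ('p \<Rightarrow> 'b) \<Rightarrow> bool" where
  "ser m a Y z \<longleftrightarrow> (\<exists>(J::nat set) b y k. (\<forall>i\<in>J. y i \<in> Y \<and> a \<le> k i \<and> b i \<in> mpow m (k i)) \<and>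
     (\<forall>n. finite {i\<in>J. k i \<le> n}) \<and>
     (\<forall>w N. z w - (\<Sum>i\<in>{i\<in>J. k i < N}. b i * y i w) \<in> mpow m N))"

lemma serE:
  assumes "ser m a Y z"
  obtains J :: "nat set" and b y k where "\<forall>i\<in>J. y i \<in> Y \<and> a \<le> k i \<and> b i \<in> mpow m (k i)"
    "\<forall>n. finite {i\<in>J. k i \<le> n}" "\<forall>w N. z w - (\<Sum>i\<in>{i\<in>J. k i < N}. b i * y i w) \<in> mpow m N"
  using assms unfolding ser_def by (elim exE conjE) blast

lemma serI:
  fixes J :: "nat set"
  assumes "\<forall>i\<in>J. y i \<in> Y \<and> a \<le> k i \<and> b i \<in> mpow m (k i)"
    "\<forall>n. finite {i\<in>J. k i \<le> n}" "\<forall>w N. z w - (\<Sum>i\<in>{i\<in>J. k i < N}. b i * y i w) \<in> mpow m N"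
  shows "ser m a Y z"
  unfolding ser_def apply (rule exI[of _ J], rule exI[of _ b], rule exI[of _ y], rule exI[of _ k])
  using assms by (intro conjI)
lemma ser_intro:
  fixes J :: "'i set" and k :: "'i \<Rightarrow> nat"
  assumes h1: "\<And>i. i\<in>J \<Longrightarrow> y i \<in> Y \<and> a \<le> k i \<and> b i \<in> mpow m (k i)"
    and h2: "\<And>n. finite {i\<in>J. k i \<le> n}"
    and h3: "\<And>w N. z w - (\<Sum>i\<in>{i\<in>J. k i < N}. b i * y i w) \<in> mpow m N"
  shows "ser m a Y z"
proof -
  have "J = (\<Union>n. {i\<in>J. k i \<le> n})" by auto
  moreover have "countable (\<Union>n. {i\<in>J. k i \<le> n})"
    using h2 by (intro countable_UN) (auto intro: countable_finite)
  ultimately have "countable J" by simp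
  then obtain f :: "'i \<Rightarrow> nat" where inj: "inj_on f J" by (auto simp: countable_def)
  define g where "g = the_inv_into J f"
  have gf: "\<And>i. i \<in> J \<Longrightarrow> g (f i) = i" unfolding g_def using inj by (simp add: the_inv_into_f_f)
  have img: "\<And>P. {j\<in>f ` J. P (g j)} = f ` {i\<in>J. P i}"
    using gf by force
  have c1: "\<forall>j\<in>f ` J. (y \<circ> g) j \<in> Y \<and> a \<le> (k \<circ> g) j \<and> (b \<circ> g) j \<in> mpow m ((k \<circ> g) j)"
    using h1 gf by auto
  have c2: "\<forall>n. finite {j\<in>f ` J. (k \<circ> g) j \<le> n}"
  proof
    fix n show "finite {j\<in>f ` J. (k \<circ> g) j \<le> n}"
      using img[of "\<lambda>i. k i \<le> n"] h2[of n] by simp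
  qed
  have c3: "\<forall>w N. z w - (\<Sum>j\<in>{j\<in>f ` J. (k \<circ> g) j < N}. (b \<circ> g) j * (y \<circ> g) j w) \<in> mpow m N"
  proof (intro allI)
    fix w N
    have "(\<Sum>j\<in>{j\<in>f ` J. (k \<circ> g) j < N}. (b \<circ> g) j * (y \<circ> g) j w)
        = (\<Sum>i\<in>{i\<in>J. k i < N}. b i * y i w)"
    proof -
      have e: "{j\<in>f ` J. (k \<circ> g) j < N} = f ` {i\<in>J. k i < N}"
        using img[of "\<lambda>i. k i < N"] by simp
      have "inj_on f {i\<in>J. k i < N}" by (rule inj_on_subset[OF inj]) auto
      then show ?thesis unfolding e by (subst sum.reindex) (auto simp: gf)
    qed
    then show "z w - (\<Sum>j\<in>{j\<in>f ` J. (k \<circ> g) j < N}. (b \<circ> g) j * (y \<circ> g) j w) \<in> mpow m N"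
      using h3 by simp
  qed
  show ?thesis
    using c1 c2 c3 by (rule serI)
qed

lemma ser_coeff: "ser m a Y z \<Longrightarrow> z w \<in> mpow m a"
proof -
  assume "ser m a Y z"
  then obtain J :: "nat set" and b y k where h1: "\<forall>i\<in>J. y i \<in> Y \<and> a \<le> k i \<and> b i \<in> mpow m (k i)"
    and h3: "\<forall>w N. z w - (\<Sum>i\<in>{i\<in>J. k i < N}. b i * y i w) \<in> mpow m N"
    by (rule serE)
  have e: "{i\<in>J. k i < a} = {}" using h1 by auto
  have "z w - (\<Sum>i\<in>{i\<in>J. k i < a}. b i * y i w) \<in> mpow m a" using h3 by blast
  then show "z w \<in> mpow m a" unfolding e by simp
qed

lemma ser_mono: "ser m a Y z \<Longrightarrow> Y \<subseteq> Y' \<Longrightarrow> a' \<le> a \<Longrightarrow> ser m a' Y' z"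
proof -
  assume "ser m a Y z" "Y \<subseteq> Y'" "a' \<le> a"
  from \<open>ser m a Y z\<close> obtain J :: "nat set" and b y k where "\<forall>i\<in>J. y i \<in> Y \<and> a \<le> k i \<and> b i \<in> mpow m (k i)"
    "\<forall>n. finite {i\<in>J. k i \<le> n}" "\<forall>w N. z w - (\<Sum>i\<in>{i\<in>J. k i < N}. b i * y i w) \<in> mpow m N"
    by (rule serE)
  moreover have "\<forall>i\<in>J. y i \<in> Y' \<and> a' \<le> k i \<and> b i \<in> mpow m (k i)"
    using calculation(1) \<open>Y \<subseteq> Y'\<close> \<open>a' \<le> a\<close> by auto
  ultimately show ?thesis by (intro serI) auto
qed

lemma ser_csum:
  fixes I :: "'i set" and g :: "'i \<Rightarrow> 'p \<Rightarrow> 'b::comm_ring_1" and od :: "'i \<Rightarrow> nat"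
  assumes hs: "\<And>i. i\<in>I \<Longrightarrow> ser m (od i) Y (g i)"
    and ha: "\<And>i. i\<in>I \<Longrightarrow> a \<le> od i"
    and hf: "\<And>n. finite {i\<in>I. od i \<le> n}"
    and hv: "\<And>w N. x w - (\<Sum>i\<in>{i\<in>I. od i < N}. g i w) \<in> mpow m N"
  shows "ser m a Y x"
proof -
  define Q where "Q i T \<longleftrightarrow> (\<forall>j\<in>fst T. fst (snd (snd T)) j \<in> Y \<and> od i \<le> snd (snd (snd T)) j
            \<and> fst (snd T) j \<in> mpow m (snd (snd (snd T)) j)) \<and>
     (\<forall>n. finite {j\<in>fst T. snd (snd (snd T)) j \<le> n}) \<and>
     (\<forall>w N. g i w - (\<Sum>j\<in>{j\<in>fst T. snd (snd (snd T)) j < N}. fst (snd T) j * fst (snd (snd T)) j w) \<in> mpow m N)"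
    for i and T :: "nat set \<times> (nat \<Rightarrow> 'b) \<times> (nat \<Rightarrow> 'p \<Rightarrow> 'b) \<times> (nat \<Rightarrow> nat)"
  have "\<forall>i\<in>I. \<exists>T. Q i T"
  proof
    fix i assume "i \<in> I"
    from hs[OF \<open>i \<in> I\<close>] obtain J :: "nat set" and b y k where "(\<forall>j\<in>J. y j \<in> Y \<and> od i \<le> k j \<and> b j \<in> mpow m (k j))"
      "(\<forall>n. finite {j\<in>J. k j \<le> n})" "(\<forall>w N. g i w - (\<Sum>j\<in>{j\<in>J. k j < N}. b j * y j w) \<in> mpow m N)"
      by (rule serE)
    then have "Q i (J, b, y, k)" unfolding Q_def by simp
    then show "\<exists>T. Q i T" by blast
  qed
  then have "\<exists>TT. \<forall>i\<in>I. Q i (TT i)" by (rule bchoice)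
  then obtain TT where TT: "\<And>i. i\<in>I \<Longrightarrow> Q i (TT i)" by blast
  define JJ where "JJ i = fst (TT i)" for i
  define bb where "bb i = fst (snd (TT i))" for i
  define yy where "yy i = fst (snd (snd (TT i)))" for i
  define kk where "kk i = snd (snd (snd (TT i)))" for i
  have T1: "\<And>i j. i\<in>I \<Longrightarrow> j \<in> JJ i \<Longrightarrow> yy i j \<in> Y \<and> od i \<le> kk i j \<and> bb i j \<in> mpow m (kk i j)"
    and T2: "\<And>i n. i\<in>I \<Longrightarrow> finite {j\<in>JJ i. kk i j \<le> n}"
    and T3: "\<And>i w N. i\<in>I \<Longrightarrow> g i w - (\<Sum>j\<in>{j\<in>JJ i. kk i j < N}. bb i j * yy i j w) \<in> mpow m N"
    using TT unfolding JJ_def bb_def yy_def kk_def Q_def by auto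
  show ?thesis
  proof (rule ser_intro[of "Sigma I JJ" "\<lambda>(i,j). yy i j" Y a "\<lambda>(i,j). kk i j" "\<lambda>(i,j). bb i j"])
    fix p assume "p \<in> Sigma I JJ" then show "(case p of (i, j) \<Rightarrow> yy i j) \<in> Y \<and> a \<le> (case p of (i, j) \<Rightarrow> kk i j) \<and>
        (case p of (i, j) \<Rightarrow> bb i j) \<in> mpow m (case p of (i, j) \<Rightarrow> kk i j)"
      using T1 ha by (clarsimp, meson le_trans)
  next
    fix n
    have "{p \<in> Sigma I JJ. (case p of (i, j) \<Rightarrow> kk i j) \<le> n} \<subseteq> Sigma {i\<in>I. od i \<le> n} (\<lambda>i. {j\<in>JJ i. kk i j \<le> n})"
    proof (clarsimp)
      fix i j assume "i \<in> I" "j \<in> JJ i" "kk i j \<le> n"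
      then show "od i \<le> n" using T1[of i j] by linarith
    qed
    moreover have "finite (Sigma {i\<in>I. od i \<le> n} (\<lambda>i. {j\<in>JJ i. kk i j \<le> n}))"
      using hf T2 by auto
    ultimately show "finite {p \<in> Sigma I JJ. (case p of (i, j) \<Rightarrow> kk i j) \<le> n}" by (rule finite_subset)
  next
    fix w N
    have eqS: "{p \<in> Sigma I JJ. (case p of (i, j) \<Rightarrow> kk i j) < N} = Sigma {i\<in>I. od i < N} (\<lambda>i. {j\<in>JJ i. kk i j < N})"
    proof (rule set_eqI)
      fix p show "p \<in> {p \<in> Sigma I JJ. (case p of (i, j) \<Rightarrow> kk i j) < N} \<longleftrightarrow> p \<in> Sigma {i\<in>I. od i < N} (\<lambda>i. {j\<in>JJ i. kk i j < N})"
      proof (cases p)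
        case (Pair i j) then show ?thesis using T1[of i j] by auto
      qed
    qed
    have finI: "finite {i\<in>I. od i < N}"
      by (rule finite_subset[OF _ hf[of N]]) auto
    have finJ: "\<And>i. i \<in> I \<Longrightarrow> finite {j\<in>JJ i. kk i j < N}"
      by (rule finite_subset[OF _ T2[of _ N]]) auto
    have e1: "(\<Sum>p\<in>{p \<in> Sigma I JJ. (case p of (i, j) \<Rightarrow> kk i j) < N}. (case p of (i, j) \<Rightarrow> bb i j) * (case p of (i, j) \<Rightarrow> yy i j) w)
       = (\<Sum>i\<in>{i\<in>I. od i < N}. \<Sum>j\<in>{j\<in>JJ i. kk i j < N}. bb i j * yy i j w)"
      unfolding eqS using finI finJ by (subst sum.Sigma) (auto simp: split_def)
    have e2: "x w - (\<Sum>i\<in>{i\<in>I. od i < N}. \<Sum>j\<in>{j\<in>JJ i. kk i j < N}. bb i j * yy i j w)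
       = (x w - (\<Sum>i\<in>{i\<in>I. od i < N}. g i w)) + (\<Sum>i\<in>{i\<in>I. od i < N}. (g i w - (\<Sum>j\<in>{j\<in>JJ i. kk i j < N}. bb i j * yy i j w)))"
      by (simp add: sum_subtractf)
    have e3: "(x w - (\<Sum>i\<in>{i\<in>I. od i < N}. g i w)) + (\<Sum>i\<in>{i\<in>I. od i < N}. (g i w - (\<Sum>j\<in>{j\<in>JJ i. kk i j < N}. bb i j * yy i j w))) \<in> mpow m N"
      by (intro mpow_add hv mpow_sum) (auto intro: T3)
    show "x w - (\<Sum>p\<in>{p \<in> Sigma I JJ. (case p of (i, j) \<Rightarrow> kk i j) < N}. (case p of (i, j) \<Rightarrow> bb i j) * (case p of (i, j) \<Rightarrow> yy i j) w) \<in> mpow m N"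
      unfolding e1 e2 by (rule e3)
  qed
qed

lemma ser_zero: "ser m a Y (\<lambda>w. 0)"
  unfolding ser_def by (rule exI[of _ "{}"]) simp

lemma ser_single:
  assumes "y \<in> Y" "b \<in> mpow m k" "a \<le> k"
  shows "ser m a Y (\<lambda>w. b * y w)"
proof (rule ser_intro[of "{()}" "\<lambda>_. y" Y a "\<lambda>_. k" "\<lambda>_. b"])
  fix w N
  show "b * y w - (\<Sum>i\<in>{i \<in> {()}. k < N}. b * y w) \<in> mpow m N"
  proof (cases "k < N")
    case False
    then show ?thesis using assms(2) by (auto intro: mpow_multR mpow_antiD)
  qed simp
qed (use assms in auto)


lemma ser_fsum:
  assumes "finite I" "\<And>i. i \<in> I \<Longrightarrow> ser m a Y (g i)"
  shows "ser m a Y (\<lambda>w. \<Sum>i\<in>I. g i w)"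
proof (rule ser_csum[where I=I and od="\<lambda>_. a"])
  fix w N
  show "(\<Sum>i\<in>I. g i w) - (\<Sum>i\<in>{i \<in> I. a < N}. g i w) \<in> mpow m N"
  proof (cases "a < N")
    case False
    then have "(\<Sum>i\<in>I. g i w) \<in> mpow m a" using assms(2) by (auto intro: mpow_sum ser_coeff)
    then show ?thesis using False by (auto intro: mpow_antiD)
  qed simp
qed (use assms in auto)

lemma ser_add:
  assumes "ser m a Y f" "ser m a Y g"
  shows "ser m a Y (\<lambda>w. f w + g w)"
proof -
  have "ser m a Y (\<lambda>w. \<Sum>i\<in>{True,False}. (if i then f else g) w)"
    by (rule ser_fsum) (use assms in auto)
  then show ?thesis by simp
qed

lemma ser_scale:
  assumes "\<mu> \<in> mpow m c" "ser m a Y z"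
  shows "ser m (a + c) Y (\<lambda>w. \<mu> * z w)"
proof -
  obtain J :: "nat set" and b y k where h1: "\<forall>i\<in>J. y i \<in> Y \<and> a \<le> k i \<and> b i \<in> mpow m (k i)"
    and h2: "\<forall>n. finite {i\<in>J. k i \<le> n}"
    and h3: "\<forall>w N. z w - (\<Sum>i\<in>{i\<in>J. k i < N}. b i * y i w) \<in> mpow m N"
    using assms(2) by (rule serE)
  show ?thesis
  proof (rule ser_intro[of J y Y "a + c" "\<lambda>i. k i + c" "\<lambda>i. \<mu> * b i"])
    fix i assume "i \<in> J" then show "y i \<in> Y \<and> a + c \<le> k i + c \<and> \<mu> * b i \<in> mpow m (k i + c)"
      using h1 assms(1) mpow_mult[of \<mu> m c "b i" "k i"] by (auto simp: add.commute)
  next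
    fix n show "finite {i \<in> J. k i + c \<le> n}"
      by (rule finite_subset[OF _ h2[rule_format, of n]]) auto
  next
    fix w N
    show "\<mu> * z w - (\<Sum>i\<in>{i \<in> J. k i + c < N}. \<mu> * b i * y i w) \<in> mpow m N"
    proof (cases "c \<le> N")
      case True
      have "{i \<in> J. k i + c < N} = {i \<in> J. k i < N - c}" using True by auto
      then have "\<mu> * z w - (\<Sum>i\<in>{i \<in> J. k i + c < N}. \<mu> * b i * y i w)
          = \<mu> * (z w - (\<Sum>i\<in>{i \<in> J. k i < N - c}. b i * y i w))"
        by (simp add: sum_distrib_left right_diff_distrib mult.assoc)
      also have "\<dots> \<in> mpow m (c + (N - c))"
        using h3 assms(1) by (intro mpow_mult) auto
      finally show ?thesis using True by simp
    next
      case False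
      then have "{i \<in> J. k i + c < N} = {}" by auto
      moreover have "\<mu> * z w \<in> mpow m (c + a)"
        using assms ser_coeff by (intro mpow_mult) auto
      ultimately show ?thesis using False by (auto intro: mpow_antiD)
    qed
  qed
qed


lemma msums_iff:
  assumes hf: "\<And>i. i\<in>J \<Longrightarrow> f i \<in> mpow m (k i)" and hfin: "\<And>n. finite {i\<in>J. k i \<le> n}"
  shows "msums m J f L \<longleftrightarrow> (\<forall>N. L - (\<Sum>i\<in>{i\<in>J. k i < N}. f i) \<in> mpow m N)"
proof -
  have finN: "finite {i\<in>J. k i < N}" for N by (rule finite_subset[OF _ hfin[of N]]) auto
  have key: "(\<Sum>i\<in>J \<inter> {..<M}. f i) - (\<Sum>i\<in>{i\<in>J. k i < N}. f i) \<in> mpow m N"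
    if "{i\<in>J. k i < N} \<subseteq> {..<M}" for M N
  proof -
    define B where "B = {i\<in>J \<inter> {..<M}. \<not> k i < N}"
    have e: "J \<inter> {..<M} = {i\<in>J. k i < N} \<union> B" using that unfolding B_def by auto
    have f2: "finite B" unfolding B_def by (rule finite_subset[of _ "{..<M}"]) auto
    have "(\<Sum>i\<in>J \<inter> {..<M}. f i) = (\<Sum>i\<in>{i\<in>J. k i < N}. f i) + (\<Sum>i\<in>B. f i)"
      unfolding e by (rule sum.union_disjoint[OF finN f2]) (auto simp: B_def)
    moreover have "(\<Sum>i\<in>B. f i) \<in> mpow m N"
    proof (rule mpow_sum)
      fix i assume "i \<in> B"
      then show "f i \<in> mpow m N" using hf[of i] mpow_antiD[of "f i" m "k i" N] by (auto simp: B_def)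
    qed
    ultimately show ?thesis by simp
  qed
  have bnd: "\<exists>M0. {i\<in>J. k i < N} \<subseteq> {..<M0}" for N
    using finN finite_nat_bounded by blast
  show ?thesis
  proof
    assume ms: "msums m J f L"
    show "\<forall>N. L - (\<Sum>i\<in>{i\<in>J. k i < N}. f i) \<in> mpow m N"
    proof
      fix N
      obtain N0 where N0: "\<forall>M\<ge>N0. (\<Sum>j\<in>J \<inter> {..<M}. f j) - L \<in> mpow m N"
        using ms unfolding msums_def by blast
      obtain M0 where M0: "{i\<in>J. k i < N} \<subseteq> {..<M0}" using bnd by blast
      have "{i\<in>J. k i < N} \<subseteq> {..<max M0 N0}" using M0 by auto
      then have a: "(\<Sum>i\<in>J \<inter> {..<max M0 N0}. f i) - (\<Sum>i\<in>{i\<in>J. k i < N}. f i) \<in> mpow m N" by (rule key)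
      have b: "(\<Sum>j\<in>J \<inter> {..<max M0 N0}. f j) - L \<in> mpow m N" using N0 by simp
      have eq: "L - (\<Sum>i\<in>{i\<in>J. k i < N}. f i) = ((\<Sum>i\<in>J \<inter> {..<max M0 N0}. f i) - (\<Sum>i\<in>{i\<in>J. k i < N}. f i)) - ((\<Sum>j\<in>J \<inter> {..<max M0 N0}. f j) - L)"
        by (simp add: algebra_simps)
      show "L - (\<Sum>i\<in>{i\<in>J. k i < N}. f i) \<in> mpow m N" unfolding eq by (rule mpow_diff[OF a b])
    qed
  next
    assume H: "\<forall>N. L - (\<Sum>i\<in>{i\<in>J. k i < N}. f i) \<in> mpow m N"
    show "msums m J f L" unfolding msums_def
    proof
      fix n
      obtain M0 where M0: "{i\<in>J. k i < n} \<subseteq> {..<M0}" using bnd by blast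
      show "\<exists>N. \<forall>M\<ge>N. (\<Sum>j\<in>J \<inter> {..<M}. f j) - L \<in> mpow m n"
      proof (intro exI allI impI)
        fix M assume "M0 \<le> M"
        then have "{i\<in>J. k i < n} \<subseteq> {..<M}" using M0 by auto
        then have a: "(\<Sum>i\<in>J \<inter> {..<M}. f i) - (\<Sum>i\<in>{i\<in>J. k i < n}. f i) \<in> mpow m n" by (rule key)
        have eq: "(\<Sum>j\<in>J \<inter> {..<M}. f j) - L = ((\<Sum>i\<in>J \<inter> {..<M}. f i) - (\<Sum>i\<in>{i\<in>J. k i < n}. f i)) - (L - (\<Sum>i\<in>{i\<in>J. k i < n}. f i))"
          by (simp add: algebra_simps)
        show "(\<Sum>j\<in>J \<inter> {..<M}. f j) - L \<in> mpow m n" unfolding eq using H by (intro mpow_diff[OF a]) blast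
      qed
    qed
  qed
qed

lemma mlin_ser: "mlin m a Y = Collect (ser m a Y)"
proof -
  have eq: "(\<forall>w. msums m J (\<lambda>i. b i * y i w) (x w)) \<longleftrightarrow> (\<forall>w N. x w - (\<Sum>i\<in>{i\<in>J. k i < N}. b i * y i w) \<in> mpow m N)"
    if "\<forall>i\<in>J. y i \<in> Y \<and> a \<le> k i \<and> b i \<in> mpow m (k i)" "\<forall>n. finite {i\<in>J. k i \<le> n}"
    for J b y k and x
  proof -
    have "msums m J (\<lambda>i. b i * y i w) (x w) \<longleftrightarrow> (\<forall>N. x w - (\<Sum>i\<in>{i\<in>J. k i < N}. b i * y i w) \<in> mpow m N)" for w
      by (rule msums_iff) (use that in \<open>auto intro: mpow_multR\<close>)
    then show ?thesis by blast
  qed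
  show ?thesis
  proof (rule set_eqI, rule iffI)
    fix x assume "x \<in> mlin m a Y"
    then obtain J b y k where H: "(\<forall>i\<in>J. y i \<in> Y \<and> a \<le> k i \<and> b i \<in> mpow m (k i)) \<and>
       (\<forall>n. finite {i\<in>J. k i \<le> n}) \<and> (\<forall>w. msums m J (\<lambda>i. b i * y i w) (x w))"
      unfolding mlin_def by blast
    then have "\<forall>w N. x w - (\<Sum>i\<in>{i\<in>J. k i < N}. b i * y i w) \<in> mpow m N" using eq[of J y k b x] by blast
    then show "x \<in> Collect (ser m a Y)" using H by (intro CollectI serI) auto
  next
    fix x assume "x \<in> Collect (ser m a Y)"
    then obtain J :: "nat set" and b y k where H1: "\<forall>i\<in>J. y i \<in> Y \<and> a \<le> k i \<and> b i \<in> mpow m (k i)"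
      and H2: "\<forall>n. finite {i\<in>J. k i \<le> n}" and H3: "\<forall>w N. x w - (\<Sum>i\<in>{i\<in>J. k i < N}. b i * y i w) \<in> mpow m N"
      by (auto elim: serE)
    then have "\<forall>w. msums m J (\<lambda>i. b i * y i w) (x w)" using eq[of J y k b x] by blast
    then show "x \<in> mlin m a Y" unfolding mlin_def using H1 H2 by blast
  qed
qed

lemma mlin_ser_iff: "x \<in> mlin m a Y \<longleftrightarrow> ser m a Y x"
  by (simp add: mlin_ser)

lemma ser_flatten: "ser m a (Collect (ser m 0 Y)) z \<Longrightarrow> ser m a Y z"
proof -
  assume "ser m a (Collect (ser m 0 Y)) z"
  then obtain J :: "nat set" and b y k where h1: "\<forall>i\<in>J. y i \<in> Collect (ser m 0 Y) \<and> a \<le> k i \<and> b i \<in> mpow m (k i)"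
    and h2: "\<forall>n. finite {i\<in>J. k i \<le> n}"
    and h3: "\<forall>w N. z w - (\<Sum>i\<in>{i\<in>J. k i < N}. b i * y i w) \<in> mpow m N"
    by (rule serE)
  show ?thesis
  proof (rule ser_csum[where I=J and od=k and g="\<lambda>i w. b i * y i w"])
    fix i assume "i \<in> J"
    then show "ser m (k i) Y (\<lambda>w. b i * y i w)"
      using ser_scale[of "b i" m "k i" 0 Y "y i"] h1 by auto
  qed (use h1 h2 h3 in auto)
qed


lemma plen_pcat [simp]: "plen (pcat x y) = plen x + plen y"
  by (simp add: plen_def pcat_def parrows_def)
lemma pstart_pcat [simp]: "pstart (pcat x y) = pstart x"
  by (simp add: pstart_def pcat_def)
lemma pend_pcat [simp]: "pend (pcat x y) = pend y"
  by (simp add: pend_def pcat_def)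
lemma parrows_pcat [simp]: "parrows (pcat x y) = parrows x @ parrows y"
  by (simp add: parrows_def pcat_def)

lemma is_path_pcat:
  assumes "is_path V A s t x" "is_path V A s t y" "pend x = pstart y"
  shows "is_path V A s t (pcat x y)"
proof -
  let ?xs = "parrows x" and ?ys = "parrows y"
  have X: "pstart x \<in> V" "pend x \<in> V" "set ?xs \<subseteq> A" "?xs = [] \<longrightarrow> pstart x = pend x"
    "?xs \<noteq> [] \<longrightarrow> s (hd ?xs) = pstart x \<and> t (last ?xs) = pend x \<and>
        (\<forall>i. Suc i < length ?xs \<longrightarrow> t (?xs ! i) = s (?xs ! Suc i))"
    using assms(1) unfolding is_path_def by auto
  have Y: "pstart y \<in> V" "pend y \<in> V" "set ?ys \<subseteq> A" "?ys = [] \<longrightarrow> pstart y = pend y"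
    "?ys \<noteq> [] \<longrightarrow> s (hd ?ys) = pstart y \<and> t (last ?ys) = pend y \<and>
        (\<forall>i. Suc i < length ?ys \<longrightarrow> t (?ys ! i) = s (?ys ! Suc i))"
    using assms(2) unfolding is_path_def by auto
  have chain: "t ((?xs @ ?ys) ! i) = s ((?xs @ ?ys) ! Suc i)" if "Suc i < length (?xs @ ?ys)" for i
  proof -
    consider "Suc i < length ?xs" | "Suc i = length ?xs" | "length ?xs \<le> i" by linarith
    then show ?thesis
    proof cases
      case 1 then show ?thesis using X(5) by (auto simp: nth_append)
    next
      case 2
      then have "?xs \<noteq> []" by auto
      moreover have "?ys \<noteq> []" using 2 that by auto
      moreover have "?xs ! i = last ?xs"
      proof -
        have "i = length ?xs - 1" using 2 by simp
        then show ?thesis using \<open>?xs \<noteq> []\<close> by (simp add: last_conv_nth)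
      qed
      moreover have "?ys ! 0 = hd ?ys" using \<open>?ys \<noteq> []\<close> by (simp add: hd_conv_nth)
      ultimately show ?thesis using 2 X(5) Y(5) assms(3) by (auto simp: nth_append)
    next
      case 3
      then show ?thesis using Y(5) that by (auto simp: nth_append Suc_diff_le)
    qed
  qed
  show ?thesis
    unfolding is_path_def using X Y assms(3) chain
    by (auto simp: hd_append last_append)
qed

lemma is_path_pcat3:
  "is_path V A s t p \<Longrightarrow> is_path V A s t u \<Longrightarrow> is_path V A s t q \<Longrightarrow> pend p = pstart u \<Longrightarrow>
   pend u = pstart q \<Longrightarrow> is_path V A s t (pcat (pcat p u) q)"
  by (intro is_path_pcat) auto

lemma pmul3_nz:
  assumes "pmul3 V A s t p f q w \<noteq> 0"
  shows "\<exists>u. is_path V A s t u \<and> pend p = pstart u \<and> pend u = pstart q \<and> pcat (pcat p u) q = w \<and> f u \<noteq> 0"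
proof -
  from assms obtain u where "u \<in> {u. is_path V A s t u \<and> pend p = pstart u \<and> pend u = pstart q \<and> pcat (pcat p u) q = w}" "f u \<noteq> 0"
    unfolding pmul3_def by (rule sum.not_neutral_contains_not_neutral)
  then show ?thesis by blast
qed

lemma pmul3_notin:
  fixes f :: "('v,'a) qpath \<Rightarrow> 'r::comm_ring_1"
  assumes "is_ideal I" "pmul3 V A s t p f q w \<notin> I"
  shows "\<exists>u. is_path V A s t u \<and> pend p = pstart u \<and> pend u = pstart q \<and> pcat (pcat p u) q = w \<and> f u \<notin> I"
proof (rule ccontr)
  assume "\<not> ?thesis"
  then have "pmul3 V A s t p f q w \<in> I" unfolding pmul3_def by (intro ideal_sum[OF assms(1)]) auto
  with assms(2) show False by simp
qed

lemma pmul3_in: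
  fixes f :: "('v,'a) qpath \<Rightarrow> 'r::comm_ring_1"
  assumes "is_ideal I" "\<And>u. f u \<in> I"
  shows "pmul3 V A s t p f q w \<in> I"
  unfolding pmul3_def by (rule ideal_sum[OF assms(1)]) (use assms(2) in auto)

lemma pmul3_add:
  "pmul3 V A s t p (\<lambda>u. f u + g u) q w = pmul3 V A s t p f q w + pmul3 V A s t p g q w"
  unfolding pmul3_def by (rule sum.distrib)

lemma pmul3_scale:
  fixes f :: "('v,'a) qpath \<Rightarrow> 'r::comm_ring_1"
  shows "pmul3 V A s t p (\<lambda>u. c * f u) q w = c * pmul3 V A s t p f q w"
  unfolding pmul3_def by (rule sum_distrib_left[symmetric])

lemma pmul3_zero [simp]: "pmul3 V A s t p (\<lambda>u. 0) q w = 0"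
  unfolding pmul3_def by simp

lemma pmul3_iota:
  "ring_hom_C \<iota> \<Longrightarrow> pmul3 V A s t p (\<lambda>u. \<iota> (f u)) q w = \<iota> (pmul3 V A s t p f q w)"
  unfolding pmul3_def by (simp add: iota_sum)

lemma pmul3_len:
  "pmul3 V A s t p f q w \<noteq> 0 \<Longrightarrow> plen p + plen q \<le> plen w"
proof -
  assume "pmul3 V A s t p f q w \<noteq> 0"
  then obtain u where "pcat (pcat p u) q = w" using pmul3_nz by blast
  then show ?thesis by auto
qed

lemma pmul3_offpath:
  "is_path V A s t p \<Longrightarrow> is_path V A s t q \<Longrightarrow> \<not> is_path V A s t w \<Longrightarrow> pmul3 V A s t p f q w = 0"
proof (rule ccontr)
  assume "is_path V A s t p" "is_path V A s t q" "\<not> is_path V A s t w" "pmul3 V A s t p f q w \<noteq> 0"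
  then obtain u where "is_path V A s t u" "pend p = pstart u" "pend u = pstart q" "pcat (pcat p u) q = w"
    using pmul3_nz by blast
  then show False using is_path_pcat3 \<open>is_path V A s t p\<close> \<open>is_path V A s t q\<close> \<open>\<not> is_path V A s t w\<close> by blast
qed

lemma pmul3_rpsi:
  "ring_hom_C \<iota> \<Longrightarrow> pmul3 V A s t p (rpsi \<iota> \<psi> r) q w = \<iota> (pmul3 V A s t p r q w) + pmul3 V A s t p (\<psi> r) q w"
  unfolding rpsi_def by (simp add: pmul3_add pmul3_iota)


lemma R_zero: "fd_sub_bimodule_ge1 V A s t R \<Longrightarrow> (\<lambda>w. 0) \<in> R"
  unfolding fd_sub_bimodule_ge1_def by blast
lemma R_add: "fd_sub_bimodule_ge1 V A s t R \<Longrightarrow> r1 \<in> R \<Longrightarrow> r2 \<in> R \<Longrightarrow> (\<lambda>w. r1 w + r2 w) \<in> R"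
  unfolding fd_sub_bimodule_ge1_def by blast
lemma R_scale: "fd_sub_bimodule_ge1 V A s t R \<Longrightarrow> r \<in> R \<Longrightarrow> (\<lambda>w. c * r w) \<in> R"
  unfolding fd_sub_bimodule_ge1_def by blast
lemma R_fin: "fd_sub_bimodule_ge1 V A s t R \<Longrightarrow> r \<in> R \<Longrightarrow> finite {w. r w \<noteq> 0}"
  unfolding fd_sub_bimodule_ge1_def by blast

lemma R_lincomb:
  assumes fd: "fd_sub_bimodule_ge1 V A s t R" and "finite G" "G \<subseteq> R"
  shows "(\<lambda>w. \<Sum>g\<in>G. c g * g w) \<in> R"
  using assms(2,3)
proof (induction G rule: finite_induct)
  case empty then show ?case using R_zero[OF fd] by simp
next
  case (insert x F)
  have "(\<lambda>w. c x * x w + (\<Sum>g\<in>F. c g * g w)) \<in> R"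
    using insert by (intro R_add[OF fd] R_scale[OF fd]) auto
  then show ?case using insert by simp
qed

lemma psi_add: "bimod_map_to_mCQ V A s t \<iota> m R \<psi> \<Longrightarrow> r1 \<in> R \<Longrightarrow> r2 \<in> R \<Longrightarrow>
    \<psi> (\<lambda>u. r1 u + r2 u) w = \<psi> r1 w + \<psi> r2 w"
  unfolding bimod_map_to_mCQ_def by blast
lemma psi_scale: "bimod_map_to_mCQ V A s t \<iota> m R \<psi> \<Longrightarrow> r \<in> R \<Longrightarrow>
    \<psi> (\<lambda>u. c * r u) w = \<iota> c * \<psi> r w"
  unfolding bimod_map_to_mCQ_def by blast
lemma psi_mCQ: "bimod_map_to_mCQ V A s t \<iota> m R \<psi> \<Longrightarrow> r \<in> R \<Longrightarrow> \<psi> r \<in> mCQ V A s t m"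
  unfolding bimod_map_to_mCQ_def by blast
lemma psi_m: "bimod_map_to_mCQ V A s t \<iota> m R \<psi> \<Longrightarrow> r \<in> R \<Longrightarrow> \<psi> r w \<in> m"
  using psi_mCQ unfolding mCQ_def mCQhat_def by blast
lemma psi_fin: "bimod_map_to_mCQ V A s t \<iota> m R \<psi> \<Longrightarrow> r \<in> R \<Longrightarrow> finite {w. \<psi> r w \<notin> mpow m k}"
  using psi_mCQ unfolding mCQ_def by blast

lemma psi_zero:
  assumes "bimod_map_to_mCQ V A s t \<iota> m R \<psi>" "fd_sub_bimodule_ge1 V A s t R"
  shows "\<psi> (\<lambda>u. 0) w = 0"
proof -
  have "\<psi> (\<lambda>u. 0 + 0) w = \<psi> (\<lambda>u. 0) w + \<psi> (\<lambda>u. 0) w"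
    using psi_add[OF assms(1) R_zero[OF assms(2)] R_zero[OF assms(2)]] by simp
  then show ?thesis by simp
qed

section \<open>Finiteness modulo powers\<close>

definition Qf :: "'b::comm_ring_1 set \<Rightarrow> ('p \<Rightarrow> 'b) \<Rightarrow> bool" where
  "Qf m f \<longleftrightarrow> (\<forall>k. finite {w. f w \<notin> mpow m k})"

lemma Qf_add: "Qf m f \<Longrightarrow> Qf m g \<Longrightarrow> Qf m (\<lambda>w. f w + g w)"
  unfolding Qf_def
proof (intro allI)
  fix k assume "\<forall>k. finite {w. f w \<notin> mpow m k}" "\<forall>k. finite {w. g w \<notin> mpow m k}"
  then have "finite ({w. f w \<notin> mpow m k} \<union> {w. g w \<notin> mpow m k})" by auto
  moreover have "{w. f w + g w \<notin> mpow m k} \<subseteq> {w. f w \<notin> mpow m k} \<union> {w. g w \<notin> mpow m k}"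
    using mpow_add by blast
  ultimately show "finite {w. f w + g w \<notin> mpow m k}" by (rule finite_subset[rotated])
qed

lemma Qf_scale: "Qf m f \<Longrightarrow> Qf m (\<lambda>w. c * f w)"
  unfolding Qf_def
proof (intro allI)
  fix k assume "\<forall>k. finite {w. f w \<notin> mpow m k}"
  moreover have "{w. c * f w \<notin> mpow m k} \<subseteq> {w. f w \<notin> mpow m k}"
    using mpow_multL by blast
  ultimately show "finite {w. c * f w \<notin> mpow m k}" by (meson finite_subset)
qed

lemma Qf_diff: "Qf m f \<Longrightarrow> Qf m g \<Longrightarrow> Qf m (\<lambda>w. f w - g w)"
proof -
  assume "Qf m f" "Qf m g"
  then have "Qf m (\<lambda>w. f w + (- 1) * g w)" by (intro Qf_add Qf_scale)
  then show ?thesis by simp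
qed

lemma Qf_zero: "Qf m (\<lambda>w. 0)"
  unfolding Qf_def by simp

lemma Qf_sum: "finite I \<Longrightarrow> (\<And>i. i \<in> I \<Longrightarrow> Qf m (g i)) \<Longrightarrow> Qf m (\<lambda>w. \<Sum>i\<in>I. g i w)"
proof (induction I rule: finite_induct)
  case empty then show ?case using Qf_zero by simp
next
  case (insert x F)
  then have "Qf m (\<lambda>w. g x w + (\<Sum>i\<in>F. g i w))" by (intro Qf_add) auto
  then show ?case using insert by simp
qed

lemma Qf_S:
  assumes hom: "ring_hom_C \<iota>" and bm: "bimod_map_to_mCQ V A s t \<iota> m R \<psi>"
    and fd: "fd_sub_bimodule_ge1 V A s t R" and r: "r \<in> R"
  shows "Qf m (pmul3 V A s t p (rpsi \<iota> \<psi> r) q)"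
  unfolding Qf_def
proof
  fix k
  let ?h = "\<lambda>u. pcat (pcat p u) q"
  have "{w. pmul3 V A s t p (rpsi \<iota> \<psi> r) q w \<notin> mpow m k}
     \<subseteq> ?h ` {u. r u \<noteq> 0} \<union> ?h ` {u. \<psi> r u \<notin> mpow m k}"
  proof
    fix w assume "w \<in> {w. pmul3 V A s t p (rpsi \<iota> \<psi> r) q w \<notin> mpow m k}"
    then have "\<iota> (pmul3 V A s t p r q w) + pmul3 V A s t p (\<psi> r) q w \<notin> mpow m k"
      by (simp add: pmul3_rpsi[OF hom])
    then have "\<iota> (pmul3 V A s t p r q w) \<notin> mpow m k \<or> pmul3 V A s t p (\<psi> r) q w \<notin> mpow m k"
      using mpow_add by blast
    then show "w \<in> ?h ` {u. r u \<noteq> 0} \<union> ?h ` {u. \<psi> r u \<notin> mpow m k}"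
    proof
      assume "\<iota> (pmul3 V A s t p r q w) \<notin> mpow m k"
      then have "pmul3 V A s t p r q w \<noteq> 0" using iota_0[OF hom] by auto
      then obtain u where "pcat (pcat p u) q = w" "r u \<noteq> 0" using pmul3_nz by blast
      then show ?thesis by blast
    next
      assume "pmul3 V A s t p (\<psi> r) q w \<notin> mpow m k"
      then obtain u where "pcat (pcat p u) q = w" "\<psi> r u \<notin> mpow m k"
        using pmul3_notin[OF mpow_ideal] by blast
      then show ?thesis by blast
    qed
  qed
  moreover have "finite (?h ` {u. r u \<noteq> 0} \<union> ?h ` {u. \<psi> r u \<notin> mpow m k})"
    using R_fin[OF fd r] psi_fin[OF bm r] by auto
  ultimately show "finite {w. pmul3 V A s t p (rpsi \<iota> \<psi> r) q w \<notin> mpow m k}"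
    by (rule finite_subset)
qed

section \<open>A basis of m^a / m^(a+1)\<close>

lemma ideal_gen_comb:
  fixes G :: "'b::comm_ring_1 set"
  assumes "finite G" "x \<in> ideal_gen G"
  shows "\<exists>c. x = (\<Sum>g\<in>G. c g * g)"
proof -
  let ?C = "{x. \<exists>c. x = (\<Sum>g\<in>G. c g * g)}"
  have "is_ideal ?C"
    unfolding is_ideal_def
  proof (intro conjI ballI allI)
    show "0 \<in> ?C" by (rule CollectI, rule exI[of _ "\<lambda>_. 0"]) simp
  next
    fix x y assume "x \<in> ?C" "y \<in> ?C"
    then obtain c d where "x = (\<Sum>g\<in>G. c g * g)" "y = (\<Sum>g\<in>G. d g * g)" by blast
    then have "x + y = (\<Sum>g\<in>G. (c g + d g) * g)" by (simp add: sum.distrib distrib_right)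
    then show "x + y \<in> ?C" by (intro CollectI exI[of _ "\<lambda>g. c g + d g"])
  next
    fix a x assume "x \<in> ?C"
    then obtain c where "x = (\<Sum>g\<in>G. c g * g)" by blast
    then have "a * x = (\<Sum>g\<in>G. (a * c g) * g)" by (simp add: sum_distrib_left mult.assoc)
    then show "a * x \<in> ?C" by (intro CollectI exI[of _ "\<lambda>g. a * c g"])
  qed
  moreover have "G \<subseteq> ?C"
  proof
    fix g0 assume "g0 \<in> G"
    have "(\<Sum>g\<in>G. (if g = g0 then 1 else 0) * g) = g0"
    proof -
      have "(\<Sum>g\<in>G. (if g = g0 then 1 else 0) * g) = (\<Sum>g\<in>G. if g = g0 then g else 0)"
        by (rule sum.cong) auto
      also have "\<dots> = g0" using assms(1) \<open>g0 \<in> G\<close> by (simp add: sum.delta)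
      finally show ?thesis .
    qed
    then show "g0 \<in> ?C" by (intro CollectI exI[of _ "\<lambda>g. if g = g0 then 1 else 0"]) simp
  qed
  ultimately have "ideal_gen G \<subseteq> ?C" by (rule ideal_gen_least)
  then show ?thesis using assms(2) by blast
qed

definition spans :: "(complex \<Rightarrow> 'b::comm_ring_1) \<Rightarrow> 'b set \<Rightarrow> nat \<Rightarrow> 'b set \<Rightarrow> bool" where
  "spans \<iota> m a X \<longleftrightarrow> finite X \<and> X \<subseteq> mpow m a \<and>
     (\<forall>b\<in>mpow m a. \<exists>lam. b - (\<Sum>\<mu>\<in>X. \<iota> (lam \<mu>) * \<mu>) \<in> mpow m (Suc a))"

lemma spans_exists:
  fixes \<iota> :: "complex \<Rightarrow> 'b::comm_ring_1"
  assumes db: "deformation_base \<iota> m"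
  shows "\<exists>X. spans \<iota> m a X"
proof -
  have hom: "ring_hom_C \<iota>" using db unfolding deformation_base_def by blast
  have "noetherian_ring TYPE('b)" using db unfolding deformation_base_def by blast
  then obtain G where G: "finite G" "mpow m a = ideal_gen G"
    unfolding noetherian_ring_def using mpow_ideal by blast
  have sub: "G \<subseteq> mpow m a" using G ideal_gen_sub by blast
  have dec: "\<forall>b. \<exists>c. b - \<iota> c \<in> m" using db unfolding deformation_base_def by blast
  then obtain d where d: "\<And>b. b - \<iota> (d b) \<in> m" by metis
  have "\<forall>b\<in>mpow m a. \<exists>lam. b - (\<Sum>\<mu>\<in>G. \<iota> (lam \<mu>) * \<mu>) \<in> mpow m (Suc a)"
  proof
    fix b assume "b \<in> mpow m a"
    then obtain c where c: "b = (\<Sum>g\<in>G. c g * g)" using ideal_gen_comb G by blast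
    have "b - (\<Sum>\<mu>\<in>G. \<iota> (d (c \<mu>)) * \<mu>) = (\<Sum>g\<in>G. (c g - \<iota> (d (c g))) * g)"
      unfolding c by (simp add: sum_subtractf left_diff_distrib)
    also have "\<dots> \<in> mpow m (Suc a)"
    proof (rule mpow_sum)
      fix g assume "g \<in> G"
      then show "(c g - \<iota> (d (c g))) * g \<in> mpow m (Suc a)"
        using mpow_Suc_mult[OF d[of "c g"], of g a] sub by blast
    qed
    finally show "\<exists>lam. b - (\<Sum>\<mu>\<in>G. \<iota> (lam \<mu>) * \<mu>) \<in> mpow m (Suc a)"
      by (intro exI[of _ "\<lambda>\<mu>. d (c \<mu>)"])
  qed
  then show ?thesis unfolding spans_def using G(1) sub by blast
qed

lemma basis_exists:
  fixes \<iota> :: "complex \<Rightarrow> 'b::comm_ring_1"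
  assumes db: "deformation_base \<iota> m"
  shows "\<exists>X. spans \<iota> m a X \<and>
     (\<forall>c. (\<Sum>\<mu>\<in>X. \<iota> (c \<mu>) * \<mu>) \<in> mpow m (Suc a) \<longrightarrow> (\<forall>\<mu>\<in>X. c \<mu> = 0))"
proof -
  have hom: "ring_hom_C \<iota>" using db unfolding deformation_base_def by blast
  obtain X0 where "spans \<iota> m a X0" using spans_exists[OF db] by blast
  then obtain X where X: "spans \<iota> m a X" and minX: "\<And>Y. spans \<iota> m a Y \<Longrightarrow> card X \<le> card Y"
    using ex_has_least_nat[of "spans \<iota> m a" X0 card] by blast
  have finX: "finite X" and subX: "X \<subseteq> mpow m a" using X unfolding spans_def by auto
  have "\<forall>c. (\<Sum>\<mu>\<in>X. \<iota> (c \<mu>) * \<mu>) \<in> mpow m (Suc a) \<longrightarrow> (\<forall>\<mu>\<in>X. c \<mu> = 0)"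
  proof (intro allI impI ballI, rule ccontr)
    fix c \<mu>0
    assume T: "(\<Sum>\<mu>\<in>X. \<iota> (c \<mu>) * \<mu>) \<in> mpow m (Suc a)" and "\<mu>0 \<in> X" and nz: "c \<mu>0 \<noteq> 0"
    let ?X' = "X - {\<mu>0}"
    have "spans \<iota> m a ?X'"
      unfolding spans_def
    proof (intro conjI ballI)
      show "finite ?X'" using finX by simp
      show "?X' \<subseteq> mpow m a" using subX by auto
    next
      fix b assume "b \<in> mpow m a"
      then obtain lam where lam: "b - (\<Sum>\<mu>\<in>X. \<iota> (lam \<mu>) * \<mu>) \<in> mpow m (Suc a)"
        using X unfolding spans_def by blast
      define K where "K = lam \<mu>0 / c \<mu>0"
      define lam' where "lam' \<mu> = lam \<mu> - K * c \<mu>" for \<mu>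
      have sX: "(\<Sum>\<mu>\<in>X. f \<mu>) = f \<mu>0 + (\<Sum>\<mu>\<in>?X'. f \<mu>)" for f :: "'b \<Rightarrow> 'b"
        using finX \<open>\<mu>0 \<in> X\<close> by (rule sum.remove)
      have Kc: "\<iota> K * \<iota> (c \<mu>0) = \<iota> (lam \<mu>0)"
        using nz by (simp add: K_def iota_mult[OF hom, symmetric])
      have "(\<Sum>\<mu>\<in>?X'. \<iota> (lam' \<mu>) * \<mu>) = (\<Sum>\<mu>\<in>?X'. \<iota> (lam \<mu>) * \<mu>) - \<iota> K * (\<Sum>\<mu>\<in>?X'. \<iota> (c \<mu>) * \<mu>)"
        by (simp add: lam'_def iota_diff[OF hom] iota_mult[OF hom] left_diff_distrib sum_subtractf
              sum_distrib_left mult.assoc)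
      also have "\<dots> = (\<Sum>\<mu>\<in>X. \<iota> (lam \<mu>) * \<mu>) - \<iota> K * (\<Sum>\<mu>\<in>X. \<iota> (c \<mu>) * \<mu>)"
        unfolding sX[of "\<lambda>\<mu>. \<iota> (lam \<mu>) * \<mu>"] sX[of "\<lambda>\<mu>. \<iota> (c \<mu>) * \<mu>"]
        using Kc by (simp add: algebra_simps)
      finally have "b - (\<Sum>\<mu>\<in>?X'. \<iota> (lam' \<mu>) * \<mu>) = (b - (\<Sum>\<mu>\<in>X. \<iota> (lam \<mu>) * \<mu>)) + \<iota> K * (\<Sum>\<mu>\<in>X. \<iota> (c \<mu>) * \<mu>)"
        by (simp add: algebra_simps)
      also have "\<dots> \<in> mpow m (Suc a)"
        using lam T by (intro mpow_add mpow_multL)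
      finally show "\<exists>lam. b - (\<Sum>\<mu>\<in>?X'. \<iota> (lam \<mu>) * \<mu>) \<in> mpow m (Suc a)"
        by (intro exI[of _ lam'])
    qed
    then have "card X \<le> card ?X'" by (rule minX)
    moreover have "card ?X' < card X" using finX \<open>\<mu>0 \<in> X\<close> by (rule card_Diff1_less)
    ultimately show False by simp
  qed
  then show ?thesis using X by blast
qed


section \<open>Splitting generators along a set of classes\<close>

definition hset :: "((('v,'a) qpath \<Rightarrow> complex) \<Rightarrow> (('v,'a) qpath \<Rightarrow> complex) set) \<Rightarrow>
   (('v,'a) qpath \<Rightarrow> bool) \<Rightarrow> ('v,'a) qpath \<Rightarrow> ('v,'a) qpath \<Rightarrow> (('v,'a) qpath \<Rightarrow> complex) \<Rightarrow>
   (('v,'a) qpath \<Rightarrow> complex) set" where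
  "hset GG nr p q r = {g\<in>GG r. \<exists>ci. g ci \<noteq> 0 \<and> nr (pcat (pcat p ci) q)}"

definition rh :: "((('v,'a) qpath \<Rightarrow> complex) \<Rightarrow> (('v,'a) qpath \<Rightarrow> complex) set) \<Rightarrow>
   ((('v,'a) qpath \<Rightarrow> complex) \<Rightarrow> (('v,'a) qpath \<Rightarrow> complex) \<Rightarrow> complex) \<Rightarrow>
   (('v,'a) qpath \<Rightarrow> bool) \<Rightarrow> ('v,'a) qpath \<Rightarrow> ('v,'a) qpath \<Rightarrow> (('v,'a) qpath \<Rightarrow> complex) \<Rightarrow>
   ('v,'a) qpath \<Rightarrow> complex" where
  "rh GG CC nr p q r = (\<lambda>w. \<Sum>g\<in>hset GG nr p q r. CC r g * g w)"

definition rt :: "((('v,'a) qpath \<Rightarrow> complex) \<Rightarrow> (('v,'a) qpath \<Rightarrow> complex) set) \<Rightarrow>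
   ((('v,'a) qpath \<Rightarrow> complex) \<Rightarrow> (('v,'a) qpath \<Rightarrow> complex) \<Rightarrow> complex) \<Rightarrow>
   (('v,'a) qpath \<Rightarrow> bool) \<Rightarrow> ('v,'a) qpath \<Rightarrow> ('v,'a) qpath \<Rightarrow> (('v,'a) qpath \<Rightarrow> complex) \<Rightarrow>
   ('v,'a) qpath \<Rightarrow> complex" where
  "rt GG CC nr p q r = (\<lambda>w. \<Sum>g\<in>GG r - hset GG nr p q r. CC r g * g w)"


declare mpow.simps(2) [simp del]

definition Sgen :: "'v set \<Rightarrow> 'a set \<Rightarrow> ('a \<Rightarrow> 'v) \<Rightarrow> ('a \<Rightarrow> 'v) \<Rightarrow>
    (complex \<Rightarrow> 'b::comm_ring_1) \<Rightarrow> (('v,'a) qpath \<Rightarrow> complex) set \<Rightarrow>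
    ((('v,'a) qpath \<Rightarrow> complex) \<Rightarrow> (('v,'a) qpath \<Rightarrow> 'b)) \<Rightarrow> (('v,'a) qpath \<Rightarrow> 'b) set" where
  "Sgen V A s t \<iota> R \<psi> = {pmul3 V A s t p (rpsi \<iota> \<psi> r) q | p r q. r \<in> R \<and> is_path V A s t p \<and> is_path V A s t q}"

context
  fixes V :: "'v set" and A :: "'a set" and s t :: "'a \<Rightarrow> 'v"
    and \<iota> :: "complex \<Rightarrow> 'b::comm_ring_1" and m :: "'b set"
    and R :: "(('v,'a) qpath \<Rightarrow> complex) set"
    and \<psi> :: "(('v,'a) qpath \<Rightarrow> complex) \<Rightarrow> (('v,'a) qpath \<Rightarrow> 'b)"
    and F :: "(('v,'a) qpath \<Rightarrow> complex) set"
    and GG :: "(('v,'a) qpath \<Rightarrow> complex) \<Rightarrow> (('v,'a) qpath \<Rightarrow> complex) set"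
    and CC :: "(('v,'a) qpath \<Rightarrow> complex) \<Rightarrow> (('v,'a) qpath \<Rightarrow> complex) \<Rightarrow> complex"
  assumes fd: "fd_sub_bimodule_ge1 V A s t R"
    and bm: "bimod_map_to_mCQ V A s t \<iota> m R \<psi>"
    and db: "deformation_base \<iota> m"
    and FR: "F \<subseteq> R"
    and Fend: "\<forall>c\<in>F. \<exists>v\<in>V. \<exists>w\<in>V. \<forall>u. c u \<noteq> 0 \<longrightarrow> pstart u = v \<and> pend u = w"
    and Fbnd: "\<forall>N. \<exists>M. \<forall>p q. is_path V A s t p \<and> plen p \<le> N \<and> equivclp (sim_step V A s t F) p q \<longrightarrow> plen q \<le> M"
    and GGF: "\<And>r. r \<in> R \<Longrightarrow> finite (GG r) \<and> GG r \<subseteq> F \<and> (\<forall>w. r w = (\<Sum>g\<in>GG r. CC r g * g w))"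
    and hyp: "IP V A s t \<iota> m R \<psi> \<inter> mCQhat V A s t m \<subseteq> mlin m 1 (IP V A s t \<iota> m R \<psi>)"
begin

lemma hom: "ring_hom_C \<iota>" using db unfolding deformation_base_def by blast
lemma m_ideal: "is_ideal m" using db unfolding deformation_base_def maximal_ideal_def by blast


lemma rh_R: "r \<in> R \<Longrightarrow> rh GG CC nr p q r \<in> R"
  unfolding rh_def using GGF[of r] FR
  by (intro R_lincomb[OF fd]) (auto simp: hset_def intro: finite_subset)

lemma rt_R: "r \<in> R \<Longrightarrow> rt GG CC nr p q r \<in> R"
  unfolding rt_def using GGF[of r] FR
  by (intro R_lincomb[OF fd]) auto

lemma r_split:
  assumes r: "r \<in> R"
  shows "r = (\<lambda>w. rh GG CC nr p q r w + rt GG CC nr p q r w)"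
proof
  fix w
  have sub: "hset GG nr p q r \<subseteq> GG r" unfolding hset_def by auto
  have "r w = (\<Sum>g\<in>GG r. CC r g * g w)" using GGF[OF r] by blast
  also have "\<dots> = (\<Sum>g\<in>GG r - hset GG nr p q r. CC r g * g w) + (\<Sum>g\<in>hset GG nr p q r. CC r g * g w)"
    using GGF[OF r] sub by (intro sum.subset_diff) auto
  finally show "r w = rh GG CC nr p q r w + rt GG CC nr p q r w"
    unfolding rh_def rt_def by simp
qed

lemma rpsi_split:
  assumes r: "r \<in> R"
  shows "pmul3 V A s t p (rpsi \<iota> \<psi> r) q w
     = pmul3 V A s t p (rpsi \<iota> \<psi> (rh GG CC nr p q r)) q w + pmul3 V A s t p (rpsi \<iota> \<psi> (rt GG CC nr p q r)) q w"
proof -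
  have "rpsi \<iota> \<psi> r = (\<lambda>u. rpsi \<iota> \<psi> (rh GG CC nr p q r) u + rpsi \<iota> \<psi> (rt GG CC nr p q r) u)"
  proof
    fix u
    have "\<psi> r u = \<psi> (rh GG CC nr p q r) u + \<psi> (rt GG CC nr p q r) u"
      using psi_add[OF bm rh_R[OF r, of nr p q] rt_R[OF r, of nr p q], of u] r_split[OF r, of nr p q] by simp
    moreover have "r u = rh GG CC nr p q r u + rt GG CC nr p q r u"
      using r_split[OF r, of nr p q] by (metis)
    ultimately show "rpsi \<iota> \<psi> r u = rpsi \<iota> \<psi> (rh GG CC nr p q r) u + rpsi \<iota> \<psi> (rt GG CC nr p q r) u"
      unfolding rpsi_def by (simp add: iota_add[OF hom] algebra_simps)
  qed
  then show ?thesis by (simp add: pmul3_add)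
qed

lemma rh_zero:
  assumes "\<And>x. nr x \<Longrightarrow> plen x \<le> Mb" "Mb < plen p + plen q"
  shows "rh GG CC nr p q r = (\<lambda>w. 0)"
proof -
  have "hset GG nr p q r = {}"
    unfolding hset_def using assms by fastforce
  then show ?thesis unfolding rh_def by simp
qed

lemma rpsi_zero: "rpsi \<iota> \<psi> (\<lambda>w. 0) = (\<lambda>w. 0)"
  unfolding rpsi_def by (auto simp: iota_0[OF hom] psi_zero[OF bm fd])

lemma rt_near:
  assumes "r \<in> R" "nr w"
  shows "pmul3 V A s t p (rt GG CC nr p q r) q w = 0"
proof (rule ccontr)
  assume "pmul3 V A s t p (rt GG CC nr p q r) q w \<noteq> 0"
  then obtain u where u: "pcat (pcat p u) q = w" "rt GG CC nr p q r u \<noteq> 0"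
    using pmul3_nz by blast
  then obtain g where "g \<in> GG r - hset GG nr p q r" "CC r g * g u \<noteq> 0"
    unfolding rt_def by (meson sum.not_neutral_contains_not_neutral)
  then have "g \<in> GG r" "g u \<noteq> 0" "\<not> (\<exists>ci. g ci \<noteq> 0 \<and> nr (pcat (pcat p ci) q))"
    unfolding hset_def by auto
  then show False using u assms(2) by blast
qed

lemma rh_far:
  assumes r: "r \<in> R" and nw: "\<not> nr w" and p: "is_path V A s t p" and q: "is_path V A s t q"
    and clos: "\<And>x y. nr x \<Longrightarrow> sim_step V A s t F x y \<Longrightarrow> nr y"
  shows "pmul3 V A s t p (rh GG CC nr p q r) q w = 0"
proof (rule ccontr)
  assume "pmul3 V A s t p (rh GG CC nr p q r) q w \<noteq> 0"
  then obtain u where u: "pcat (pcat p u) q = w" "rh GG CC nr p q r u \<noteq> 0" "pend p = pstart u" "pend u = pstart q"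
    using pmul3_nz by blast
  then obtain g where "g \<in> hset GG nr p q r" "CC r g * g u \<noteq> 0"
    unfolding rh_def by (meson sum.not_neutral_contains_not_neutral)
  then obtain cj where g: "g \<in> GG r" "g u \<noteq> 0" "g cj \<noteq> 0" "nr (pcat (pcat p cj) q)"
    unfolding hset_def by auto
  have gF: "g \<in> F" using g(1) GGF[OF r] by blast
  then obtain v1 v2 where H: "\<forall>x. g x \<noteq> 0 \<longrightarrow> pstart x = v1 \<and> pend x = v2" using Fend by blast
  have "pstart cj = v1" "pend cj = v2" using H g(3) by blast+
  moreover have "pstart u = v1" "pend u = v2" using H g(2) by blast+
  ultimately have "pstart cj = pstart u" "pend cj = pend u" by simp_all
  then have "sim_step V A s t F (pcat (pcat p cj) q) (pcat (pcat p u) q)"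
    unfolding sim_step_def using gF g p q u by metis
  then have "nr w" using clos g(4) u(1) by blast
  then show False using nw by blast
qed


lemma S_P: "Sgen V A s t \<iota> R \<psi> \<subseteq> Pideal_gen V A s t \<iota> R \<psi>"
proof
  fix x assume "x \<in> Sgen V A s t \<iota> R \<psi>"
  then obtain p r q where x: "x = pmul3 V A s t p (rpsi \<iota> \<psi> r) q" "r \<in> R" "is_path V A s t p" "is_path V A s t q"
    unfolding Sgen_def by blast
  have eq: "x w = (\<Sum>i\<in>{i\<in>{0::nat}. plen p + plen q \<le> plen w}. pmul3 V A s t p (rpsi \<iota> \<psi> r) q w)" for w
  proof (cases "plen p + plen q \<le> plen w")
    case False
    then show ?thesis using x(1) pmul3_len by fastforce
  qed (simp add: x(1))
  show "x \<in> Pideal_gen V A s t \<iota> R \<psi>"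
    unfolding Pideal_gen_def
    by (rule CollectI, rule exI[of _ "{0::nat}"], rule exI[of _ "\<lambda>_. r"], rule exI[of _ "\<lambda>_. p"],
        rule exI[of _ "\<lambda>_. q"]) (use x eq in auto)
qed

lemma step:
  assumes zser: "ser m a (Pideal_gen V A s t \<iota> R \<psi>) z" and zQ: "Qf m z"
    and zoff: "\<forall>w. \<not> is_path V A s t w \<longrightarrow> z w = 0"
  shows "\<exists>g. ser m a (Sgen V A s t \<iota> R \<psi>) g \<and> Qf m g \<and> (\<forall>w. \<not> is_path V A s t w \<longrightarrow> g w = 0) \<and>
     ser m (Suc a) (Pideal_gen V A s t \<iota> R \<psi>) (\<lambda>w. z w - g w)"
proof -
  let ?P = "Pideal_gen V A s t \<iota> R \<psi>"
  let ?S = "Sgen V A s t \<iota> R \<psi>"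
  let ?sim = "sim_step V A s t F"
  obtain J :: "nat set" and \<beta> Z \<kappa> where h1: "\<forall>i\<in>J. Z i \<in> ?P \<and> a \<le> \<kappa> i \<and> \<beta> i \<in> mpow m (\<kappa> i)"
    and h2: "\<forall>n. finite {i\<in>J. \<kappa> i \<le> n}"
    and h3: "\<forall>w N. z w - (\<Sum>i\<in>{i\<in>J. \<kappa> i < N}. \<beta> i * Z i w) \<in> mpow m N"
    using zser by (rule serE)
  define Aset where "Aset = {\<alpha>\<in>J. \<kappa> \<alpha> \<le> a}"
  have finA: "finite Aset" unfolding Aset_def using h2 by blast
  have AJ: "Aset \<subseteq> J" unfolding Aset_def by blast
  have kA: "\<And>\<alpha>. \<alpha> \<in> Aset \<Longrightarrow> \<kappa> \<alpha> = a" unfolding Aset_def using h1 by force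
  have \<beta>A: "\<And>\<alpha>. \<alpha> \<in> Aset \<Longrightarrow> \<beta> \<alpha> \<in> mpow m a" using kA h1 AJ by force
  have ZA: "\<And>\<alpha>. \<alpha> \<in> Aset \<Longrightarrow> Z \<alpha> \<in> ?P" using h1 AJ by blast
  have AN: "{\<alpha>\<in>J. \<kappa> \<alpha> < Suc a} = Aset" unfolding Aset_def by auto
  define W0 where "W0 = {w. z w \<notin> mpow m (Suc a)}"
  have finW: "finite W0" using zQ unfolding W0_def Qf_def by blast
  have W0path: "\<And>u. u \<in> W0 \<Longrightarrow> is_path V A s t u"
  proof -
    fix u assume "u \<in> W0"
    then have "z u \<noteq> 0" unfolding W0_def by (metis mem_Collect_eq mpow_0)
    then show "is_path V A s t u" using zoff by blast
  qed
  define N0 where "N0 = (\<Sum>u\<in>W0. plen u)"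
  have N0: "\<And>u. u \<in> W0 \<Longrightarrow> plen u \<le> N0" unfolding N0_def using finW by (intro member_le_sum) auto
  obtain M0 where M0: "\<forall>p q. is_path V A s t p \<and> plen p \<le> N0 \<and> equivclp ?sim p q \<longrightarrow> plen q \<le> M0"
    using Fbnd by blast
  define nr where "nr w \<longleftrightarrow> (\<exists>u\<in>W0. equivclp ?sim u w)" for w
  have nr_bnd: "\<And>x. nr x \<Longrightarrow> plen x \<le> M0"
  proof -
    fix x assume "nr x"
    then obtain u where u: "u \<in> W0" "equivclp ?sim u x" unfolding nr_def by blast
    have c: "is_path V A s t u \<and> plen u \<le> N0 \<and> equivclp ?sim u x"
      using u(2) N0[OF u(1)] W0path[OF u(1)] by (intro conjI)
    show "plen x \<le> M0" using mp[OF spec[OF spec[OF M0, of u], of x] c] .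
  qed
  have nr_clos: "\<And>x y. nr x \<Longrightarrow> ?sim x y \<Longrightarrow> nr y"
  proof -
    fix x y assume "nr x" "?sim x y"
    from \<open>nr x\<close> obtain u where u: "u \<in> W0" "equivclp ?sim u x" unfolding nr_def by blast
    have "equivclp ?sim u y" using equivclp_trans[OF u(2) r_into_equivclp[where r="?sim", OF \<open>?sim x y\<close>]] .
    then show "nr y" unfolding nr_def using u(1) by (intro bexI[of _ u])
  qed
  have nr_W0: "\<And>w. w \<in> W0 \<Longrightarrow> nr w"
  proof -
    fix w assume "w \<in> W0"
    then show "nr w" unfolding nr_def by (rule bexI[of _ w, OF equivclp_refl])
  qed

  define PR where "PR \<alpha> T \<longleftrightarrow> (\<forall>i\<in>fst T. fst (snd T) i \<in> R \<and> is_path V A s t (fst (snd (snd T)) i) \<and> is_path V A s t (snd (snd (snd T)) i)) \<and>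
      (\<forall>n. finite {i\<in>fst T. plen (fst (snd (snd T)) i) + plen (snd (snd (snd T)) i) \<le> n}) \<and>
      (\<forall>w. Z \<alpha> w = (\<Sum>i\<in>{i\<in>fst T. plen (fst (snd (snd T)) i) + plen (snd (snd (snd T)) i) \<le> plen w}.
                    pmul3 V A s t (fst (snd (snd T)) i) (rpsi \<iota> \<psi> (fst (snd T) i)) (snd (snd (snd T)) i) w))"
    for \<alpha> and T :: "nat set \<times> (nat \<Rightarrow> ('v,'a) qpath \<Rightarrow> complex) \<times> (nat \<Rightarrow> ('v,'a) qpath) \<times> (nat \<Rightarrow> ('v,'a) qpath)"
  have "\<forall>\<alpha>\<in>Aset. \<exists>T. PR \<alpha> T"
  proof
    fix \<alpha> assume "\<alpha> \<in> Aset"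
    then have "Z \<alpha> \<in> ?P" by (rule ZA)
    then obtain Jx :: "nat set" and rx px qx where
      "(\<forall>i\<in>Jx. rx i \<in> R \<and> is_path V A s t (px i) \<and> is_path V A s t (qx i)) \<and>
      (\<forall>n. finite {i\<in>Jx. plen (px i) + plen (qx i) \<le> n}) \<and>
      (\<forall>w. Z \<alpha> w = (\<Sum>i\<in>{i\<in>Jx. plen (px i) + plen (qx i) \<le> plen w}.
                    pmul3 V A s t (px i) (rpsi \<iota> \<psi> (rx i)) (qx i) w))"
      unfolding Pideal_gen_def by blast
    then have "PR \<alpha> (Jx, rx, px, qx)" unfolding PR_def by simp
    then show "\<exists>T. PR \<alpha> T" by blast
  qed
  then have "\<exists>TT. \<forall>\<alpha>\<in>Aset. PR \<alpha> (TT \<alpha>)" by (rule bchoice)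
  then obtain TT where TT: "\<And>\<alpha>. \<alpha> \<in> Aset \<Longrightarrow> PR \<alpha> (TT \<alpha>)" by blast
  define Jp where "Jp \<alpha> = fst (TT \<alpha>)" for \<alpha>
  define rr where "rr \<alpha> = fst (snd (TT \<alpha>))" for \<alpha>
  define pp where "pp \<alpha> = fst (snd (snd (TT \<alpha>)))" for \<alpha>
  define qq where "qq \<alpha> = snd (snd (snd (TT \<alpha>)))" for \<alpha>
  have P1: "\<And>\<alpha> i. \<alpha> \<in> Aset \<Longrightarrow> i \<in> Jp \<alpha> \<Longrightarrow> rr \<alpha> i \<in> R \<and> is_path V A s t (pp \<alpha> i) \<and> is_path V A s t (qq \<alpha> i)"
    and P2: "\<And>\<alpha> n. \<alpha> \<in> Aset \<Longrightarrow> finite {i\<in>Jp \<alpha>. plen (pp \<alpha> i) + plen (qq \<alpha> i) \<le> n}"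
    and P3: "\<And>\<alpha> w. \<alpha> \<in> Aset \<Longrightarrow> Z \<alpha> w = (\<Sum>i\<in>{i\<in>Jp \<alpha>. plen (pp \<alpha> i) + plen (qq \<alpha> i) \<le> plen w}.
                    pmul3 V A s t (pp \<alpha> i) (rpsi \<iota> \<psi> (rr \<alpha> i)) (qq \<alpha> i) w)"
    using TT unfolding PR_def Jp_def rr_def pp_def qq_def by auto

  define RH where "RH \<alpha> i = rh GG CC nr (pp \<alpha> i) (qq \<alpha> i) (rr \<alpha> i)" for \<alpha> i
  define RT where "RT \<alpha> i = rt GG CC nr (pp \<alpha> i) (qq \<alpha> i) (rr \<alpha> i)" for \<alpha> i
  define Iw where "Iw \<alpha> w = {i\<in>Jp \<alpha>. plen (pp \<alpha> i) + plen (qq \<alpha> i) \<le> plen w}" for \<alpha> and w :: "('v,'a) qpath"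
  define IH where "IH \<alpha> = {i\<in>Jp \<alpha>. plen (pp \<alpha> i) + plen (qq \<alpha> i) \<le> M0}" for \<alpha>
  define Tail where "Tail \<alpha> w = (\<Sum>i\<in>Iw \<alpha> w. pmul3 V A s t (pp \<alpha> i) (rpsi \<iota> \<psi> (RT \<alpha> i)) (qq \<alpha> i) w)" for \<alpha> w
  define Head where "Head \<alpha> w = (\<Sum>i\<in>IH \<alpha>. pmul3 V A s t (pp \<alpha> i) (rpsi \<iota> \<psi> (RH \<alpha> i)) (qq \<alpha> i) w)" for \<alpha> w
  define tC where "tC \<alpha> w = (\<Sum>i\<in>Iw \<alpha> w. pmul3 V A s t (pp \<alpha> i) (RT \<alpha> i) (qq \<alpha> i) w)" for \<alpha> w
  define tM where "tM \<alpha> w = (\<Sum>i\<in>Iw \<alpha> w. pmul3 V A s t (pp \<alpha> i) (\<psi> (RT \<alpha> i)) (qq \<alpha> i) w)" for \<alpha> w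
  define hC where "hC \<alpha> w = (\<Sum>i\<in>IH \<alpha>. pmul3 V A s t (pp \<alpha> i) (RH \<alpha> i) (qq \<alpha> i) w)" for \<alpha> w
  define hM where "hM \<alpha> w = (\<Sum>i\<in>IH \<alpha>. pmul3 V A s t (pp \<alpha> i) (\<psi> (RH \<alpha> i)) (qq \<alpha> i) w)" for \<alpha> w

  have finIw: "\<And>\<alpha> w. \<alpha> \<in> Aset \<Longrightarrow> finite (Iw \<alpha> w)" unfolding Iw_def using P2 by blast
  have finIH: "\<And>\<alpha>. \<alpha> \<in> Aset \<Longrightarrow> finite (IH \<alpha>)" unfolding IH_def using P2 by blast
  have RH_R: "\<And>\<alpha> i. \<alpha> \<in> Aset \<Longrightarrow> i \<in> Jp \<alpha> \<Longrightarrow> RH \<alpha> i \<in> R" unfolding RH_def using P1 rh_R by blast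
  have RT_R: "\<And>\<alpha> i. \<alpha> \<in> Aset \<Longrightarrow> i \<in> Jp \<alpha> \<Longrightarrow> RT \<alpha> i \<in> R" unfolding RT_def using P1 rt_R by blast

  have TailP: "\<And>\<alpha>. \<alpha> \<in> Aset \<Longrightarrow> Tail \<alpha> \<in> ?P"
  proof -
    fix \<alpha> assume \<alpha>: "\<alpha> \<in> Aset"
    show "Tail \<alpha> \<in> ?P"
      unfolding Pideal_gen_def
      by (rule CollectI, rule exI[of _ "Jp \<alpha>"], rule exI[of _ "RT \<alpha>"], rule exI[of _ "pp \<alpha>"],
          rule exI[of _ "qq \<alpha>"]) (use \<alpha> P1 P2 RT_R in \<open>auto simp: Tail_def Iw_def\<close>)
  qed

  have F1: "\<And>\<alpha> w. \<alpha> \<in> Aset \<Longrightarrow> Z \<alpha> w = Head \<alpha> w + Tail \<alpha> w"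
  proof -
    fix \<alpha> w assume \<alpha>: "\<alpha> \<in> Aset"
    have "Z \<alpha> w = (\<Sum>i\<in>Iw \<alpha> w. pmul3 V A s t (pp \<alpha> i) (rpsi \<iota> \<psi> (rr \<alpha> i)) (qq \<alpha> i) w)"
      using P3[OF \<alpha>] unfolding Iw_def by blast
    also have "\<dots> = (\<Sum>i\<in>Iw \<alpha> w. pmul3 V A s t (pp \<alpha> i) (rpsi \<iota> \<psi> (RH \<alpha> i)) (qq \<alpha> i) w) + Tail \<alpha> w"
      unfolding Tail_def RH_def RT_def sum.distrib[symmetric]
      by (rule sum.cong[OF refl], rule rpsi_split) (use \<alpha> P1 in \<open>auto simp: Iw_def\<close>)
    also have "(\<Sum>i\<in>Iw \<alpha> w. pmul3 V A s t (pp \<alpha> i) (rpsi \<iota> \<psi> (RH \<alpha> i)) (qq \<alpha> i) w)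
        = (\<Sum>i\<in>Iw \<alpha> w \<inter> IH \<alpha>. pmul3 V A s t (pp \<alpha> i) (rpsi \<iota> \<psi> (RH \<alpha> i)) (qq \<alpha> i) w)"
    proof (rule sum.mono_neutral_right[OF finIw[OF \<alpha>]])
      show "\<forall>i\<in>Iw \<alpha> w - Iw \<alpha> w \<inter> IH \<alpha>. pmul3 V A s t (pp \<alpha> i) (rpsi \<iota> \<psi> (RH \<alpha> i)) (qq \<alpha> i) w = 0"
      proof
        fix i assume "i \<in> Iw \<alpha> w - Iw \<alpha> w \<inter> IH \<alpha>"
        then have "M0 < plen (pp \<alpha> i) + plen (qq \<alpha> i)" unfolding Iw_def IH_def by auto
        then have "RH \<alpha> i = (\<lambda>w. 0)" unfolding RH_def
          by (intro rh_zero[where nr=nr and Mb=M0]) (use nr_bnd in auto)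
        then show "pmul3 V A s t (pp \<alpha> i) (rpsi \<iota> \<psi> (RH \<alpha> i)) (qq \<alpha> i) w = 0"
          by (simp add: rpsi_zero)
      qed
    qed auto
    also have "\<dots> = Head \<alpha> w"
      unfolding Head_def
    proof (rule sum.mono_neutral_left[OF finIH[OF \<alpha>]])
      show "\<forall>i\<in>IH \<alpha> - Iw \<alpha> w \<inter> IH \<alpha>. pmul3 V A s t (pp \<alpha> i) (rpsi \<iota> \<psi> (RH \<alpha> i)) (qq \<alpha> i) w = 0"
      proof
        fix i assume "i \<in> IH \<alpha> - Iw \<alpha> w \<inter> IH \<alpha>"
        then have "\<not> plen (pp \<alpha> i) + plen (qq \<alpha> i) \<le> plen w" unfolding Iw_def IH_def by auto
        then show "pmul3 V A s t (pp \<alpha> i) (rpsi \<iota> \<psi> (RH \<alpha> i)) (qq \<alpha> i) w = 0"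
          using pmul3_len by blast
      qed
    qed auto
    finally show "Z \<alpha> w = Head \<alpha> w + Tail \<alpha> w" by simp
  qed

  have tsplit: "\<And>\<alpha> w. Tail \<alpha> w = \<iota> (tC \<alpha> w) + tM \<alpha> w"
    unfolding Tail_def tC_def tM_def by (simp add: pmul3_rpsi[OF hom] iota_sum[OF hom] sum.distrib)
  have hsplit: "\<And>\<alpha> w. Head \<alpha> w = \<iota> (hC \<alpha> w) + hM \<alpha> w"
    unfolding Head_def hC_def hM_def by (simp add: pmul3_rpsi[OF hom] iota_sum[OF hom] sum.distrib)
  have tMm: "\<And>\<alpha> w. \<alpha> \<in> Aset \<Longrightarrow> tM \<alpha> w \<in> m"
    unfolding tM_def
    by (rule ideal_sum[OF m_ideal], rule pmul3_in[OF m_ideal], rule psi_m[OF bm])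
       (auto simp: Iw_def intro: RT_R)
  have hMm: "\<And>\<alpha> w. \<alpha> \<in> Aset \<Longrightarrow> hM \<alpha> w \<in> m"
    unfolding hM_def
    by (rule ideal_sum[OF m_ideal], rule pmul3_in[OF m_ideal], rule psi_m[OF bm])
       (auto simp: IH_def intro: RH_R)
  have tC_near: "\<And>\<alpha> w. \<alpha> \<in> Aset \<Longrightarrow> nr w \<Longrightarrow> tC \<alpha> w = 0"
    unfolding tC_def RT_def using P1 rt_near by (auto simp: Iw_def intro!: sum.neutral)
  have hC_far: "\<And>\<alpha> w. \<alpha> \<in> Aset \<Longrightarrow> \<not> nr w \<Longrightarrow> hC \<alpha> w = 0"
    unfolding hC_def RH_def using P1 rh_far[OF _ _ _ _ nr_clos] by (auto simp: IH_def intro!: sum.neutral)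

  have key1: "\<And>w. (\<Sum>\<alpha>\<in>Aset. \<beta> \<alpha> * \<iota> (tC \<alpha> w)) \<in> mpow m (Suc a)"
  proof -
    fix w
    show "(\<Sum>\<alpha>\<in>Aset. \<beta> \<alpha> * \<iota> (tC \<alpha> w)) \<in> mpow m (Suc a)"
    proof (cases "nr w")
      case True
      then show ?thesis using tC_near by (simp add: iota_0[OF hom])
    next
      case False
      then have "z w \<in> mpow m (Suc a)" using nr_W0 unfolding W0_def by blast
      moreover have "z w - (\<Sum>\<alpha>\<in>Aset. \<beta> \<alpha> * Z \<alpha> w) \<in> mpow m (Suc a)"
      proof -
        have "z w - (\<Sum>i\<in>{i\<in>J. \<kappa> i < Suc a}. \<beta> i * Z i w) \<in> mpow m (Suc a)" using h3 by blast
        then show ?thesis unfolding AN .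
      qed
      ultimately have "z w - (z w - (\<Sum>\<alpha>\<in>Aset. \<beta> \<alpha> * Z \<alpha> w)) \<in> mpow m (Suc a)"
        by (rule mpow_diff)
      then have sZ: "(\<Sum>\<alpha>\<in>Aset. \<beta> \<alpha> * Z \<alpha> w) \<in> mpow m (Suc a)" by simp
      have sH: "(\<Sum>\<alpha>\<in>Aset. \<beta> \<alpha> * hM \<alpha> w) \<in> mpow m (Suc a)"
      proof (rule mpow_sum)
        fix \<alpha> assume \<alpha>: "\<alpha> \<in> Aset"
        show "\<beta> \<alpha> * hM \<alpha> w \<in> mpow m (Suc a)"
          using mpow_Suc_mult[OF hMm[OF \<alpha>] \<beta>A[OF \<alpha>]] by (simp add: mult.commute)
      qed
      have sT: "(\<Sum>\<alpha>\<in>Aset. \<beta> \<alpha> * tM \<alpha> w) \<in> mpow m (Suc a)"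
      proof (rule mpow_sum)
        fix \<alpha> assume \<alpha>: "\<alpha> \<in> Aset"
        show "\<beta> \<alpha> * tM \<alpha> w \<in> mpow m (Suc a)"
          using mpow_Suc_mult[OF tMm[OF \<alpha>] \<beta>A[OF \<alpha>]] by (simp add: mult.commute)
      qed
      have "(\<Sum>\<alpha>\<in>Aset. \<beta> \<alpha> * Z \<alpha> w) = (\<Sum>\<alpha>\<in>Aset. \<beta> \<alpha> * hM \<alpha> w) + (\<Sum>\<alpha>\<in>Aset. \<beta> \<alpha> * \<iota> (tC \<alpha> w)) + (\<Sum>\<alpha>\<in>Aset. \<beta> \<alpha> * tM \<alpha> w)"
        unfolding sum.distrib[symmetric]
        by (rule sum.cong[OF refl]) (simp add: F1 tsplit hsplit hC_far[OF _ False] iota_0[OF hom] algebra_simps)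
      then have "(\<Sum>\<alpha>\<in>Aset. \<beta> \<alpha> * \<iota> (tC \<alpha> w)) = (\<Sum>\<alpha>\<in>Aset. \<beta> \<alpha> * Z \<alpha> w) - (\<Sum>\<alpha>\<in>Aset. \<beta> \<alpha> * hM \<alpha> w) - (\<Sum>\<alpha>\<in>Aset. \<beta> \<alpha> * tM \<alpha> w)"
        by (simp add: algebra_simps)
      then show ?thesis using mpow_diff[OF mpow_diff[OF sZ sH] sT] by simp
    qed
  qed

  obtain X where X: "spans \<iota> m a X" and indep: "\<forall>c. (\<Sum>\<mu>\<in>X. \<iota> (c \<mu>) * \<mu>) \<in> mpow m (Suc a) \<longrightarrow> (\<forall>\<mu>\<in>X. c \<mu> = 0)"
    using basis_exists[OF db] by blast
  have finX: "finite X" and subX: "X \<subseteq> mpow m a" using X unfolding spans_def by auto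
  have "\<forall>\<alpha>\<in>Aset. \<exists>lam. \<beta> \<alpha> - (\<Sum>\<mu>\<in>X. \<iota> (lam \<mu>) * \<mu>) \<in> mpow m (Suc a)"
    using X \<beta>A unfolding spans_def by blast
  then obtain LAM where LAM: "\<And>\<alpha>. \<alpha> \<in> Aset \<Longrightarrow> \<beta> \<alpha> - (\<Sum>\<mu>\<in>X. \<iota> (LAM \<alpha> \<mu>) * \<mu>) \<in> mpow m (Suc a)"
    using bchoice[of Aset "\<lambda>\<alpha> lam. \<beta> \<alpha> - (\<Sum>\<mu>\<in>X. \<iota> (lam \<mu>) * \<mu>) \<in> mpow m (Suc a)"] by blast
  define eps where "eps \<alpha> = \<beta> \<alpha> - (\<Sum>\<mu>\<in>X. \<iota> (LAM \<alpha> \<mu>) * \<mu>)" for \<alpha>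

  have key2: "\<And>\<mu> w. \<mu> \<in> X \<Longrightarrow> (\<Sum>\<alpha>\<in>Aset. LAM \<alpha> \<mu> * tC \<alpha> w) = 0"
  proof -
    fix \<mu>0 w assume "\<mu>0 \<in> X"
    have "(\<Sum>\<mu>\<in>X. \<iota> (\<Sum>\<alpha>\<in>Aset. LAM \<alpha> \<mu> * tC \<alpha> w) * \<mu>)
        = (\<Sum>\<alpha>\<in>Aset. \<iota> (tC \<alpha> w) * (\<Sum>\<mu>\<in>X. \<iota> (LAM \<alpha> \<mu>) * \<mu>))"
      by (simp add: iota_sum[OF hom] iota_mult[OF hom] sum_distrib_left sum_distrib_right
          sum.swap[of _ X Aset] algebra_simps)
    also have "\<dots> = (\<Sum>\<alpha>\<in>Aset. \<beta> \<alpha> * \<iota> (tC \<alpha> w)) - (\<Sum>\<alpha>\<in>Aset. eps \<alpha> * \<iota> (tC \<alpha> w))"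
      unfolding sum_subtractf[symmetric] by (rule sum.cong[OF refl]) (simp add: eps_def algebra_simps)
    also have "\<dots> \<in> mpow m (Suc a)"
    proof (rule mpow_diff[OF key1], rule mpow_sum)
      fix \<alpha> assume "\<alpha> \<in> Aset"
      then show "eps \<alpha> * \<iota> (tC \<alpha> w) \<in> mpow m (Suc a)"
        using LAM unfolding eps_def by (intro mpow_multR) blast
    qed
    finally have "(\<Sum>\<mu>\<in>X. \<iota> (\<Sum>\<alpha>\<in>Aset. LAM \<alpha> \<mu> * tC \<alpha> w) * \<mu>) \<in> mpow m (Suc a)" .
    then have "\<forall>\<mu>\<in>X. (\<lambda>\<mu>. \<Sum>\<alpha>\<in>Aset. LAM \<alpha> \<mu> * tC \<alpha> w) \<mu> = 0"
      using indep[rule_format, of "\<lambda>\<mu>. \<Sum>\<alpha>\<in>Aset. LAM \<alpha> \<mu> * tC \<alpha> w"] by blast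
    then show "(\<Sum>\<alpha>\<in>Aset. LAM \<alpha> \<mu>0 * tC \<alpha> w) = 0"
      using \<open>\<mu>0 \<in> X\<close> by blast
  qed

  define Y where "Y \<mu> w = (\<Sum>\<alpha>\<in>Aset. \<iota> (LAM \<alpha> \<mu>) * Tail \<alpha> w)" for \<mu> w
  have Yser: "\<And>\<mu>. \<mu> \<in> X \<Longrightarrow> ser m (Suc a) ?P (\<lambda>w. \<mu> * Y \<mu> w)"
  proof -
    fix \<mu> assume \<mu>: "\<mu> \<in> X"
    have IPeq: "IP V A s t \<iota> m R \<psi> = Collect (ser m 0 ?P)" unfolding IP_def by (rule mlin_ser)
    have "ser m 0 ?P (Y \<mu>)"
      unfolding Y_def using finA
      by (intro ser_fsum ser_single[where k=0]) (auto intro: TailP)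
    then have "Y \<mu> \<in> IP V A s t \<iota> m R \<psi>" unfolding IPeq by simp
    moreover have "Y \<mu> \<in> mCQhat V A s t m"
      unfolding mCQhat_def
    proof (intro CollectI conjI allI impI)
      fix w
      have "Y \<mu> w = \<iota> (\<Sum>\<alpha>\<in>Aset. LAM \<alpha> \<mu> * tC \<alpha> w) + (\<Sum>\<alpha>\<in>Aset. \<iota> (LAM \<alpha> \<mu>) * tM \<alpha> w)"
        unfolding Y_def tsplit by (simp add: iota_sum[OF hom] iota_mult[OF hom] distrib_left sum.distrib)
      also have "\<dots> = (\<Sum>\<alpha>\<in>Aset. \<iota> (LAM \<alpha> \<mu>) * tM \<alpha> w)"
        using key2[OF \<mu>] by (simp add: iota_0[OF hom])
      also have "\<dots> \<in> m"
        by (rule ideal_sum[OF m_ideal], rule ideal_mult[OF m_ideal]) (rule tMm)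
      finally show "Y \<mu> w \<in> m" .
    next
      fix w assume nw: "\<not> is_path V A s t w"
      have "Tail \<alpha> w = 0" if "\<alpha> \<in> Aset" for \<alpha>
        unfolding Tail_def using P1 that nw by (auto simp: Iw_def intro!: sum.neutral pmul3_offpath)
      then show "Y \<mu> w = 0" unfolding Y_def by simp
    qed
    ultimately have "Y \<mu> \<in> mlin m 1 (IP V A s t \<iota> m R \<psi>)" using hyp by blast
    then have "ser m 1 (Collect (ser m 0 ?P)) (Y \<mu>)" unfolding IPeq mlin_ser_iff .
    then have "ser m 1 ?P (Y \<mu>)" by (rule ser_flatten)
    then have "ser m (1 + a) ?P (\<lambda>w. \<mu> * Y \<mu> w)" using \<mu> subX by (intro ser_scale) auto
    then show "ser m (Suc a) ?P (\<lambda>w. \<mu> * Y \<mu> w)" by simp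
  qed

  define z' where "z' w = z w - (\<Sum>\<alpha>\<in>Aset. \<beta> \<alpha> * Z \<alpha> w)" for w
  have z'ser: "ser m (Suc a) ?P z'"
  proof (rule serI[where J="J - Aset" and y=Z and b=\<beta> and k=\<kappa>])
    show "\<forall>i\<in>J - Aset. Z i \<in> ?P \<and> Suc a \<le> \<kappa> i \<and> \<beta> i \<in> mpow m (\<kappa> i)"
      using h1 unfolding Aset_def by force
    show "\<forall>n. finite {i \<in> J - Aset. \<kappa> i \<le> n}"
    proof
      fix n show "finite {i \<in> J - Aset. \<kappa> i \<le> n}"
        by (rule finite_subset[OF _ h2[rule_format, of n]]) auto
    qed
    show "\<forall>w N. z' w - (\<Sum>i | i \<in> J - Aset \<and> \<kappa> i < N. \<beta> i * Z i w) \<in> mpow m N"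
    proof (intro allI)
      fix w N
      show "z' w - (\<Sum>i | i \<in> J - Aset \<and> \<kappa> i < N. \<beta> i * Z i w) \<in> mpow m N"
      proof (cases "N \<le> Suc a")
        case True
        have e: "{i. i \<in> J - Aset \<and> \<kappa> i < N} = {}" using True unfolding Aset_def by auto
        have "z' w \<in> mpow m (Suc a)" unfolding z'_def using h3 AN by metis
        then show ?thesis unfolding e using True mpow_antiD by simp
      next
        case False
        have e: "{i\<in>J. \<kappa> i < N} = Aset \<union> {i. i \<in> J - Aset \<and> \<kappa> i < N}" using False unfolding Aset_def by auto
        have fin2: "finite {i. i \<in> J - Aset \<and> \<kappa> i < N}"
          by (rule finite_subset[OF _ h2[rule_format, of N]]) auto
        have "(\<Sum>i\<in>{i\<in>J. \<kappa> i < N}. \<beta> i * Z i w) = (\<Sum>i\<in>Aset. \<beta> i * Z i w) + (\<Sum>i | i \<in> J - Aset \<and> \<kappa> i < N. \<beta> i * Z i w)"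
          unfolding e by (rule sum.union_disjoint[OF finA fin2]) auto
        then have eq: "z' w - (\<Sum>i | i \<in> J - Aset \<and> \<kappa> i < N. \<beta> i * Z i w) = z w - (\<Sum>i\<in>{i\<in>J. \<kappa> i < N}. \<beta> i * Z i w)"
          unfolding z'_def by simp
        have "z w - (\<Sum>i\<in>{i\<in>J. \<kappa> i < N}. \<beta> i * Z i w) \<in> mpow m N" using h3 by blast
        then show ?thesis unfolding eq .
      qed
    qed
  qed

  have Eser: "ser m (Suc a) ?P (\<lambda>w. \<Sum>\<alpha>\<in>Aset. eps \<alpha> * Tail \<alpha> w)"
    using finA LAM by (intro ser_fsum ser_single[where k="Suc a"]) (auto simp: eps_def intro: TailP)
  have Ysum: "ser m (Suc a) ?P (\<lambda>w. \<Sum>\<mu>\<in>X. \<mu> * Y \<mu> w)"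
    using finX Yser by (intro ser_fsum) auto

  define g where "g w = (\<Sum>\<alpha>\<in>Aset. \<beta> \<alpha> * Head \<alpha> w)" for w
  have ident: "z w - g w = z' w + (\<Sum>\<alpha>\<in>Aset. eps \<alpha> * Tail \<alpha> w) + (\<Sum>\<mu>\<in>X. \<mu> * Y \<mu> w)" for w
  proof -
    have s1: "(\<Sum>\<alpha>\<in>Aset. \<beta> \<alpha> * Z \<alpha> w) = g w + (\<Sum>\<alpha>\<in>Aset. \<beta> \<alpha> * Tail \<alpha> w)"
      unfolding g_def sum.distrib[symmetric] by (rule sum.cong[OF refl]) (simp add: F1 distrib_left)
    have s2: "(\<Sum>\<alpha>\<in>Aset. \<beta> \<alpha> * Tail \<alpha> w) = (\<Sum>\<alpha>\<in>Aset. eps \<alpha> * Tail \<alpha> w) + (\<Sum>\<mu>\<in>X. \<mu> * Y \<mu> w)"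
    proof -
      have "(\<Sum>\<alpha>\<in>Aset. \<beta> \<alpha> * Tail \<alpha> w) = (\<Sum>\<alpha>\<in>Aset. eps \<alpha> * Tail \<alpha> w + (\<Sum>\<mu>\<in>X. \<iota> (LAM \<alpha> \<mu>) * \<mu>) * Tail \<alpha> w)"
        by (rule sum.cong[OF refl]) (simp add: eps_def algebra_simps)
      also have "\<dots> = (\<Sum>\<alpha>\<in>Aset. eps \<alpha> * Tail \<alpha> w) + (\<Sum>\<alpha>\<in>Aset. \<Sum>\<mu>\<in>X. \<mu> * (\<iota> (LAM \<alpha> \<mu>) * Tail \<alpha> w))"
      proof -
        have "(\<Sum>\<mu>\<in>X. \<iota> (LAM \<alpha> \<mu>) * \<mu>) * Tail \<alpha> w = (\<Sum>\<mu>\<in>X. \<mu> * (\<iota> (LAM \<alpha> \<mu>) * Tail \<alpha> w))" for \<alpha>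
          unfolding sum_distrib_right by (rule sum.cong[OF refl]) (simp add: mult_ac)
        then show ?thesis by (simp add: sum.distrib)
      qed
      also have "(\<Sum>\<alpha>\<in>Aset. \<Sum>\<mu>\<in>X. \<mu> * (\<iota> (LAM \<alpha> \<mu>) * Tail \<alpha> w)) = (\<Sum>\<mu>\<in>X. \<mu> * Y \<mu> w)"
        unfolding Y_def by (simp add: sum.swap[of _ Aset X] sum_distrib_left)
      finally show ?thesis .
    qed
    show ?thesis unfolding z'_def s1 s2 by (simp add: algebra_simps)
  qed
  have "ser m (Suc a) ?P (\<lambda>w. (z' w + (\<Sum>\<alpha>\<in>Aset. eps \<alpha> * Tail \<alpha> w)) + (\<Sum>\<mu>\<in>X. \<mu> * Y \<mu> w))"
    by (intro ser_add z'ser Eser Ysum)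
  then have zg: "ser m (Suc a) ?P (\<lambda>w. z w - g w)" using ident by simp

  have Sel: "\<And>\<alpha> i. \<alpha> \<in> Aset \<Longrightarrow> i \<in> IH \<alpha> \<Longrightarrow> pmul3 V A s t (pp \<alpha> i) (rpsi \<iota> \<psi> (RH \<alpha> i)) (qq \<alpha> i) \<in> ?S"
    unfolding Sgen_def IH_def using P1 RH_R by blast
  have gS: "ser m a ?S g"
  proof -
    have "ser m a ?S (\<lambda>w. \<Sum>\<alpha>\<in>Aset. \<Sum>i\<in>IH \<alpha>. \<beta> \<alpha> * pmul3 V A s t (pp \<alpha> i) (rpsi \<iota> \<psi> (RH \<alpha> i)) (qq \<alpha> i) w)"
      using finA finIH Sel \<beta>A by (intro ser_fsum ser_single[where k=a]) auto
    moreover have "(\<lambda>w. \<Sum>\<alpha>\<in>Aset. \<Sum>i\<in>IH \<alpha>. \<beta> \<alpha> * pmul3 V A s t (pp \<alpha> i) (rpsi \<iota> \<psi> (RH \<alpha> i)) (qq \<alpha> i) w) = g"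
      unfolding g_def Head_def by (simp add: sum_distrib_left)
    ultimately show ?thesis by simp
  qed
  have gQ: "Qf m g"
  proof -
    have "Qf m (\<lambda>w. \<Sum>\<alpha>\<in>Aset. \<beta> \<alpha> * Head \<alpha> w)"
      unfolding Head_def using finA finIH P1 RH_R
      by (intro Qf_sum Qf_scale Qf_S[OF hom bm fd]) (auto simp: IH_def)
    then show ?thesis unfolding g_def .
  qed
  have goff: "\<forall>w. \<not> is_path V A s t w \<longrightarrow> g w = 0"
  proof (intro allI impI)
    fix w assume nw: "\<not> is_path V A s t w"
    have "Head \<alpha> w = 0" if "\<alpha> \<in> Aset" for \<alpha>
      unfolding Head_def using P1 that nw by (auto simp: IH_def intro!: sum.neutral pmul3_offpath)
    then show "g w = 0" unfolding g_def by simp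
  qed
  have zgQ: "Qf m (\<lambda>w. z w - g w)" using zQ gQ by (rule Qf_diff)
  show ?thesis using gS gQ goff zg by blast
qed

end


lemma ser_self: "y \<in> Y \<Longrightarrow> ser m 0 Y y"
  using ser_single[of y Y 1 m 0 0] by simp

theorem proposition6p48:
  fixes V :: "'v set" and A :: "'a set" and s t :: "'a \<Rightarrow> 'v"
    and \<iota> :: "complex \<Rightarrow> 'b::comm_ring_1" and m :: "'b set"
    and R :: "(('v,'a) qpath \<Rightarrow> complex) set"
    and \<psi> :: "(('v,'a) qpath \<Rightarrow> complex) \<Rightarrow> (('v,'a) qpath \<Rightarrow> 'b)"
  assumes "finite_quiver V A s t"
    and "fd_sub_bimodule_ge1 V A s t R"
    and "bounded_type V A s t R"
    and "deformation_base \<iota> m"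
    and "bimod_map_to_mCQ V A s t \<iota> m R \<psi>"
    and "IP V A s t \<iota> m R \<psi> \<inter> mCQhat V A s t m \<subseteq> mlin m 1 (IP V A s t \<iota> m R \<psi>)"
  shows "IP_CQ V A s t \<iota> m R \<psi> \<inter> mCQ V A s t m \<subseteq> mlin m 1 (IP_CQ V A s t \<iota> m R \<psi>)"
proof
  fix x assume x: "x \<in> IP_CQ V A s t \<iota> m R \<psi> \<inter> mCQ V A s t m"
  note fd = assms(2) and db = assms(4) and bm = assms(5) and hyp = assms(6)
  let ?P = "Pideal_gen V A s t \<iota> R \<psi>"
  let ?S = "Sgen V A s t \<iota> R \<psi>"
  define PF where "PF F \<longleftrightarrow> F \<subseteq> R \<and> clin_indep F \<and> R \<subseteq> cspan F \<and>
     (\<forall>c\<in>F. \<exists>v\<in>V. \<exists>w\<in>V. \<forall>u. c u \<noteq> 0 \<longrightarrow> pstart u = v \<and> pend u = w) \<and>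
     (\<forall>N. \<exists>M. \<forall>p q. is_path V A s t p \<and> plen p \<le> N \<and> equivclp (sim_step V A s t F) p q
            \<longrightarrow> plen q \<le> M)" for F
  have exF: "\<exists>F. PF F" using assms(3) unfolding bounded_type_def PF_def .
  define F where "F = (SOME F. PF F)"
  have F: "PF F" unfolding F_def by (rule someI_ex[OF exF])
  have FR: "F \<subseteq> R" using F unfolding PF_def by (rule conjunct1)
  have RF: "R \<subseteq> cspan F" using F unfolding PF_def by (elim conjE)
  have Fend: "\<forall>c\<in>F. \<exists>v\<in>V. \<exists>w\<in>V. \<forall>u. c u \<noteq> 0 \<longrightarrow> pstart u = v \<and> pend u = w"
    using F unfolding PF_def by (elim conjE)
  have Fbnd: "\<forall>N. \<exists>M. \<forall>p q. is_path V A s t p \<and> plen p \<le> N \<and> equivclp (sim_step V A s t F) p q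
            \<longrightarrow> plen q \<le> M"
    using F unfolding PF_def by (elim conjE)
  have "\<forall>r\<in>R. \<exists>GC. finite (fst GC) \<and> fst GC \<subseteq> F \<and> (\<forall>w. r w = (\<Sum>g\<in>fst GC. snd GC g * g w))"
  proof
    fix r assume "r \<in> R"
    then have "r \<in> cspan F" using RF by blast
    then obtain G c where "finite G" "G \<subseteq> F" "\<forall>w. r w = (\<Sum>g\<in>G. c g * g w)"
      unfolding cspan_def by blast
    then show "\<exists>GC. finite (fst GC) \<and> fst GC \<subseteq> F \<and> (\<forall>w. r w = (\<Sum>g\<in>fst GC. snd GC g * g w))"
      by (intro exI[of _ "(G, c)"]) simp
  qed
  then obtain T where T: "\<forall>r\<in>R. finite (fst (T r)) \<and> fst (T r) \<subseteq> F \<and> (\<forall>w. r w = (\<Sum>g\<in>fst (T r). snd (T r) g * g w))"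
    by (rule bchoice[elim_format]) blast
  define GG where "GG r = fst (T r)" for r
  define CC where "CC r = snd (T r)" for r
  have GGF: "\<And>r. r \<in> R \<Longrightarrow> finite (GG r) \<and> GG r \<subseteq> F \<and> (\<forall>w. r w = (\<Sum>g\<in>GG r. CC r g * g w))"
    using T unfolding GG_def CC_def by blast
  note step' = step[OF fd bm db FR Fend Fbnd GGF hyp]
  have SP: "?S \<subseteq> ?P" by (rule S_P[OF fd bm db FR Fend Fbnd GGF hyp])

  have IPCQ: "IP_CQ V A s t \<iota> m R \<psi> = Collect (ser m 0 ?S)"
    unfolding IP_CQ_def Sgen_def by (rule mlin_ser)
  have IPe: "IP V A s t \<iota> m R \<psi> = Collect (ser m 0 ?P)"
    unfolding IP_def by (rule mlin_ser)
  have x0: "ser m 0 ?S x" using x IPCQ by blast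
  have "ser m 0 ?P x" using ser_mono[OF x0 SP] by simp
  then have "x \<in> IP V A s t \<iota> m R \<psi>" using IPe by simp
  moreover have xhat: "x \<in> mCQhat V A s t m" using x unfolding mCQ_def by blast
  ultimately have "x \<in> mlin m 1 (IP V A s t \<iota> m R \<psi>)" using hyp by blast
  then have "ser m 1 (Collect (ser m 0 ?P)) x" unfolding IPe mlin_ser_iff .
  then have x1: "ser m 1 ?P x" by (rule ser_flatten)
  have xQ: "Qf m x" using x unfolding mCQ_def Qf_def by blast
  have xoff: "\<forall>w. \<not> is_path V A s t w \<longrightarrow> x w = 0" using xhat unfolding mCQhat_def by blast

  define Inv where "Inv n z \<longleftrightarrow> ser m (Suc n) ?P z \<and> Qf m z \<and> (\<forall>w. \<not> is_path V A s t w \<longrightarrow> z w = 0)"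
    for n and z :: "('v,'a) qpath \<Rightarrow> 'b"
  define Gp where "Gp n z g \<longleftrightarrow> ser m (Suc n) ?S g \<and> Qf m g \<and> (\<forall>w. \<not> is_path V A s t w \<longrightarrow> g w = 0) \<and>
       ser m (Suc (Suc n)) ?P (\<lambda>w. z w - g w)" for n z g
  define G where "G n z = (SOME g. Gp n z g)" for n z
  have Gprop: "Gp n z (G n z)" if "Inv n z" for n z
  proof -
    have "\<exists>g. Gp n z g" using that step'[of "Suc n" z] unfolding Inv_def Gp_def by blast
    then show ?thesis unfolding G_def by (rule someI_ex)
  qed
  define zs where "zs = rec_nat x (\<lambda>n z. (\<lambda>w. z w - G n z w))"
  have zs0: "zs 0 = x" unfolding zs_def by simp
  have zsS: "zs (Suc n) = (\<lambda>w. zs n w - G n (zs n) w)" for n unfolding zs_def by simp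
  have inv: "Inv n (zs n)" for n
  proof (induction n)
    case 0 then show ?case unfolding Inv_def zs0 using x1 xQ xoff by simp
  next
    case (Suc n)
    then have "Gp n (zs n) (G n (zs n))" by (rule Gprop)
    then show ?case unfolding Inv_def Gp_def zsS
      using Suc.IH unfolding Inv_def by (auto intro: Qf_diff)
  qed
  define gs where "gs n = G n (zs n)" for n
  have gser: "ser m (Suc n) ?S (gs n)" for n
    using Gprop[OF inv[of n]] unfolding Gp_def gs_def by blast
  have partial: "x w - (\<Sum>j<n. gs j w) = zs n w" for n w
  proof (induction n)
    case 0 then show ?case by (simp add: zs0)
  next
    case (Suc n) then show ?case by (simp add: zsS gs_def algebra_simps)
  qed
  have "ser m 1 ?S x"
  proof (rule ser_csum[where I=UNIV and od=Suc and g=gs])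
    fix n :: nat show "finite {i \<in> UNIV. Suc i \<le> n}"
      by (rule finite_subset[of _ "{..<n}"]) auto
  next
    fix w N
    have e: "{i \<in> UNIV. Suc i < N} = {..<N - 1}" by auto
    have "zs (N - 1) w \<in> mpow m (Suc (N - 1))"
      using inv[of "N - 1"] unfolding Inv_def by (blast intro: ser_coeff)
    then have "zs (N - 1) w \<in> mpow m N" by (rule mpow_antiD) simp
    then show "x w - (\<Sum>i \<in> {i \<in> UNIV. Suc i < N}. gs i w) \<in> mpow m N"
      unfolding e partial .
  qed (use gser in auto)
  then have "ser m 1 (Collect (ser m 0 ?S)) x"
    by (rule ser_mono) (auto intro: ser_self)
  then show "x \<in> mlin m 1 (IP_CQ V A s t \<iota> m R \<psi>)"
    unfolding IPCQ mlin_ser_iff .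
qed

end
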